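(* Let $\mathbf M=(M,\vee_{\mathbf M},(\sqsubseteq^n_{\mathbf M})_{n\ge1})$ be a multi-argument specialization semilattice and let $\widetilde{\mathbf M}$, $K$ and $\upsilon_{\mathbf M}$ be as constructed in the context. Then: (1) $\widetilde{\mathbf M}$ is a principal regular multi-argument specialization semilattice. (2) $\upsilon_{\mathbf M}$ is an embedding of $\mathbf M$ into $\widetilde{\mathbf M}$. (3) For every principal regular multi-argument specialization semilattice $\mathbf T$ and every homomorphism $\eta:\mathbf M\to\mathbf T$ there is a unique $K$-homomorphism $\widetilde\eta:\widetilde{\mathbf M}\to\mathbf T$ such that $\widetilde\eta(\upsilon_{\mathbf M}(a))=\eta(a)$ for all $a\in M$. (4) If $\mathbf U$ is another multi-argument specialization semilattice and $\psi:\mathbf M\to\mathbf U$ is a homomorphism, then there is a unique $K$-homomorphism $\widetilde\psi:\widetilde{\mathbf M}\to\widetilde{\mathbf U}$ such that $\widetilde\psi(\upsilon_{\mathbf M}(a))=\upsilon_{\mathbf U}(\psi(a))$ for all $a\in M$ (where $\widetilde{\mathbf U},\upsilon_{\mathbf U}$ are constructed from $\mathbf U$ in the same way).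
   Context: A multi-argument specialization semilattice is a join semilattice $(M,\vee)$ (order $a\le b$ iff $a\vee b=b$) with, for each $n\ge1$, an $(n+1)$-ary relation $a\sqsubseteq^n b_1,\dots,b_n$ (also written $a\sqsubseteq b_1,\dots,b_n$) such that: (M1) $a\sqsubseteq a$; (M2) $a\sqsubseteq b_1,\dots,b_n$ and $b_1\sqsubseteq c$ imply $a\sqsubseteq c,b_2,\dots,b_n$; (M3) $a\le b$ and $b\sqsubseteq c_1,\dots,c_m$ imply $a\sqsubseteq c_1,\dots,c_m$; (M4) $a\sqsubseteq b_1,\dots,b_n$ implies $a\sqsubseteq b_{\sigma1},\dots,b_{\sigma n}$ for every permutation $\sigma$; (M5) $a\sqsubseteq b_1,\dots,b_n,b_n$ implies $a\sqsubseteq b_1,\dots,b_n$; (M6) $a\sqsubseteq b_1,\dots,b_n$ implies $a\sqsubseteq b_1,\dots,b_n,b_{n+1}$; (M7) $a\sqsubseteq b_1,\dots,b_n$ and $a_1\sqsubseteq b_1,\dots,b_n$ imply $a\vee a_1\sqsubseteq b_1,\dots,b_n$. It is principal if for every $x$ there is a $\le$-largest $y$ with $y\sqsubseteq^1 x$, denoted $Kx$; a principal one is regular if $a\sqsubseteq^n b_1,\dots,b_n$ holds iff $a\le Kb_1\vee\dots\vee Kb_n$. A homomorphism is a join-preserving map $\varphi$ with $a\sqsubseteq^n b_1,\dots,b_n\Rightarrow\varphi(a)\sqsubseteq^n\varphi(b_1),\dots,\varphi(b_n)$ for all $n$; an embedding is an injective homomorphism for which the converse implications also hold. A $K$-homomorphism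 between principal ones is a homomorphism $\varphi$ with $\varphi(Ka)=K\varphi(a)$ for all $a$. Construction: let $M^{<\omega}$ be the set of finite subsets of $M$. On $M\times M^{<\omega}$ put $(a,\{b_1,\dots,b_h\})\precsim(c,\{d_1,\dots,d_k\})$ iff (a1) there is $d\in M$ with $d\sqsubseteq_{\mathbf M}d_1,\dots,d_k$ and $a\le_{\mathbf M}c\vee_{\mathbf M}d$ (if $k=0$ this reads $a\le_{\mathbf M}c$), and (a2) for every $i\le h$ there is $j\le k$ with $b_i\sqsubseteq^1_{\mathbf M}d_j$. Let $x\sim y$ iff $x\precsim y$ and $y\precsim x$ (an equivalence relation and a congruence for the product semilattice $(M,\vee_{\mathbf M})\times(M^{<\omega},\cup)$). Let $\widetilde M$ be the quotient, with classes $[a,\{b_1,\dots,b_h\}]$ and join $[a,\{b_1,\dots,b_h\}]\vee[c,\{d_1,\dots,d_k\}]=[a\vee_{\mathbf M}c,\{b_1,\dots,b_h,d_1,\dots,d_k\}]$, and $\le$ the induced order. Define $K[a,\{b_1,\dots,b_h\}]=[a,\{a\vee_{\mathbf M}b_1\vee_{\mathbf M}\dots\vee_{\mathbf M}b_h\}]$ (well defined). For $n\ge1$ define $x\sqsubseteq^n y_1,\dots,y_n$ in $\widetilde M$ iff $x\le Ky_1\vee\dots\vee Ky_n$. Set $\widetilde{\mathbf M}=(\widetilde M,\vee,(\sqsubseteq^n)_{n\ge1})$ and $\upsilon_{\mathbf M}(a)=[a,\emptyset]$ for $a\in M$. *)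

theory Defs
  imports Main "HOL-Library.Multiset"
begin

text \<open>A multi-argument specialization semilattice is given by a carrier set M,
a binary join j, and a relation S a bs meaning a \<sqsubseteq>^n b_1,...,b_n where
bs = [b_1,...,b_n] (n = length bs \<ge> 1).\<close>

definition sle :: "('a \<Rightarrow> 'a \<Rightarrow> 'a) \<Rightarrow> 'a \<Rightarrow> 'a \<Rightarrow> bool" where
  "sle j a b \<longleftrightarrow> j a b = b"

fun joinl :: "('a \<Rightarrow> 'a \<Rightarrow> 'a) \<Rightarrow> 'a list \<Rightarrow> 'a" where
  "joinl j [] = undefined"
| "joinl j [x] = x"
| "joinl j (x # y # ys) = j x (joinl j (y # ys))"

definition mass :: "'a set \<Rightarrow> ('a \<Rightarrow> 'a \<Rightarrow> 'a) \<Rightarrow> ('a \<Rightarrow> 'a list \<Rightarrow> bool) \<Rightarrow> bool" where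
  "mass M j S \<longleftrightarrow>
     (\<forall>a\<in>M. \<forall>b\<in>M. j a b \<in> M) \<and>
     (\<forall>a\<in>M. \<forall>b\<in>M. \<forall>c\<in>M. j (j a b) c = j a (j b c)) \<and>
     (\<forall>a\<in>M. \<forall>b\<in>M. j a b = j b a) \<and>
     (\<forall>a\<in>M. j a a = a) \<and>
     (\<forall>a bs. S a bs \<longrightarrow> a \<in> M \<and> bs \<noteq> [] \<and> set bs \<subseteq> M) \<and>
     (\<forall>a\<in>M. S a [a]) \<and>
     (\<forall>a b bs c. S a (b # bs) \<and> S b [c] \<longrightarrow> S a (c # bs)) \<and>
     (\<forall>a\<in>M. \<forall>b cs. sle j a b \<and> S b cs \<longrightarrow> S a cs) \<and>
     (\<forall>a bs bs'. S a bs \<and> mset bs' = mset bs \<longrightarrow> S a bs') \<and>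
     (\<forall>a bs b. S a (bs @ [b, b]) \<longrightarrow> S a (bs @ [b])) \<and>
     (\<forall>a bs b. S a bs \<and> b \<in> M \<longrightarrow> S a (bs @ [b])) \<and>
     (\<forall>a a1 bs. S a bs \<and> S a1 bs \<longrightarrow> S (j a a1) bs)"

definition principal :: "'a set \<Rightarrow> ('a \<Rightarrow> 'a \<Rightarrow> 'a) \<Rightarrow> ('a \<Rightarrow> 'a list \<Rightarrow> bool) \<Rightarrow> bool" where
  "principal M j S \<longleftrightarrow> mass M j S \<and>
     (\<forall>x\<in>M. \<exists>y\<in>M. S y [x] \<and> (\<forall>z\<in>M. S z [x] \<longrightarrow> sle j z y))"

definition Kop :: "'a set \<Rightarrow> ('a \<Rightarrow> 'a \<Rightarrow> 'a) \<Rightarrow> ('a \<Rightarrow> 'a list \<Rightarrow> bool) \<Rightarrow> 'a \<Rightarrow> 'a" where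
  "Kop M j S x = (THE y. y \<in> M \<and> S y [x] \<and> (\<forall>z\<in>M. S z [x] \<longrightarrow> sle j z y))"

definition regular :: "'a set \<Rightarrow> ('a \<Rightarrow> 'a \<Rightarrow> 'a) \<Rightarrow> ('a \<Rightarrow> 'a list \<Rightarrow> bool) \<Rightarrow> bool" where
  "regular M j S \<longleftrightarrow> principal M j S \<and>
     (\<forall>a bs. S a bs \<longleftrightarrow>
        (a \<in> M \<and> bs \<noteq> [] \<and> set bs \<subseteq> M \<and> sle j a (joinl j (map (Kop M j S) bs))))"

definition mhom :: "'a set \<Rightarrow> ('a \<Rightarrow> 'a \<Rightarrow> 'a) \<Rightarrow> ('a \<Rightarrow> 'a list \<Rightarrow> bool) \<Rightarrow>
    'b set \<Rightarrow> ('b \<Rightarrow> 'b \<Rightarrow> 'b) \<Rightarrow> ('b \<Rightarrow> 'b list \<Rightarrow> bool) \<Rightarrow> ('a \<Rightarrow> 'b) \<Rightarrow> bool" where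
  "mhom M j S N k R f \<longleftrightarrow>
     (\<forall>a\<in>M. f a \<in> N) \<and>
     (\<forall>a\<in>M. \<forall>b\<in>M. f (j a b) = k (f a) (f b)) \<and>
     (\<forall>a bs. S a bs \<longrightarrow> R (f a) (map f bs))"

definition membedding :: "'a set \<Rightarrow> ('a \<Rightarrow> 'a \<Rightarrow> 'a) \<Rightarrow> ('a \<Rightarrow> 'a list \<Rightarrow> bool) \<Rightarrow>
    'b set \<Rightarrow> ('b \<Rightarrow> 'b \<Rightarrow> 'b) \<Rightarrow> ('b \<Rightarrow> 'b list \<Rightarrow> bool) \<Rightarrow> ('a \<Rightarrow> 'b) \<Rightarrow> bool" where
  "membedding M j S N k R f \<longleftrightarrow> mhom M j S N k R f \<and> inj_on f M \<and>
     (\<forall>a\<in>M. \<forall>bs. bs \<noteq> [] \<and> set bs \<subseteq> M \<and> R (f a) (map f bs) \<longrightarrow> S a bs)"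

definition Khom :: "'a set \<Rightarrow> ('a \<Rightarrow> 'a \<Rightarrow> 'a) \<Rightarrow> ('a \<Rightarrow> 'a list \<Rightarrow> bool) \<Rightarrow>
    'b set \<Rightarrow> ('b \<Rightarrow> 'b \<Rightarrow> 'b) \<Rightarrow> ('b \<Rightarrow> 'b list \<Rightarrow> bool) \<Rightarrow> ('a \<Rightarrow> 'b) \<Rightarrow> bool" where
  "Khom M j S N k R f \<longleftrightarrow> mhom M j S N k R f \<and>
     (\<forall>a\<in>M. f (Kop M j S a) = Kop N k R (f a))"

definition jset :: "('a \<Rightarrow> 'a \<Rightarrow> 'a) \<Rightarrow> 'a \<Rightarrow> 'a set \<Rightarrow> 'a" where
  "jset j a B = foldr j (SOME xs. set xs = B) a"

definition Pdom :: "'a set \<Rightarrow> ('a \<times> 'a set) set" where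
  "Pdom M = {(a, B). a \<in> M \<and> B \<subseteq> M \<and> finite B}"

definition prec :: "'a set \<Rightarrow> ('a \<Rightarrow> 'a \<Rightarrow> 'a) \<Rightarrow> ('a \<Rightarrow> 'a list \<Rightarrow> bool) \<Rightarrow>
    'a \<times> 'a set \<Rightarrow> 'a \<times> 'a set \<Rightarrow> bool" where
  "prec M j S p q \<longleftrightarrow>
     (if snd q = {} then sle j (fst p) (fst q)
      else (\<exists>d\<in>M. \<exists>ds. set ds = snd q \<and> distinct ds \<and> S d ds \<and> sle j (fst p) (j (fst q) d))) \<and>
     (\<forall>b\<in>snd p. \<exists>d\<in>snd q. S b [d])"

definition cls :: "'a set \<Rightarrow> ('a \<Rightarrow> 'a \<Rightarrow> 'a) \<Rightarrow> ('a \<Rightarrow> 'a list \<Rightarrow> bool) \<Rightarrow>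
    'a \<times> 'a set \<Rightarrow> ('a \<times> 'a set) set" where
  "cls M j S p = {q \<in> Pdom M. prec M j S q p \<and> prec M j S p q}"

definition tcar :: "'a set \<Rightarrow> ('a \<Rightarrow> 'a \<Rightarrow> 'a) \<Rightarrow> ('a \<Rightarrow> 'a list \<Rightarrow> bool) \<Rightarrow>
    ('a \<times> 'a set) set set" where
  "tcar M j S = cls M j S ` Pdom M"

definition tjoin :: "'a set \<Rightarrow> ('a \<Rightarrow> 'a \<Rightarrow> 'a) \<Rightarrow> ('a \<Rightarrow> 'a list \<Rightarrow> bool) \<Rightarrow>
    ('a \<times> 'a set) set \<Rightarrow> ('a \<times> 'a set) set \<Rightarrow> ('a \<times> 'a set) set" where
  "tjoin M j S X Y =
     {q. \<exists>p\<in>X. \<exists>p'\<in>Y. q \<in> cls M j S (j (fst p) (fst p'), snd p \<union> snd p')}"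

definition tK :: "'a set \<Rightarrow> ('a \<Rightarrow> 'a \<Rightarrow> 'a) \<Rightarrow> ('a \<Rightarrow> 'a list \<Rightarrow> bool) \<Rightarrow>
    ('a \<times> 'a set) set \<Rightarrow> ('a \<times> 'a set) set" where
  "tK M j S X = {q. \<exists>p\<in>X. q \<in> cls M j S (fst p, {jset j (fst p) (snd p)})}"

definition tS :: "'a set \<Rightarrow> ('a \<Rightarrow> 'a \<Rightarrow> 'a) \<Rightarrow> ('a \<Rightarrow> 'a list \<Rightarrow> bool) \<Rightarrow>
    ('a \<times> 'a set) set \<Rightarrow> ('a \<times> 'a set) set list \<Rightarrow> bool" where
  "tS M j S X Ys \<longleftrightarrow> X \<in> tcar M j S \<and> Ys \<noteq> [] \<and> set Ys \<subseteq> tcar M j S \<and>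
     sle (tjoin M j S) X (joinl (tjoin M j S) (map (tK M j S) Ys))"

definition ups :: "'a set \<Rightarrow> ('a \<Rightarrow> 'a \<Rightarrow> 'a) \<Rightarrow> ('a \<Rightarrow> 'a list \<Rightarrow> bool) \<Rightarrow>
    'a \<Rightarrow> ('a \<times> 'a set) set" where
  "ups M j S a = cls M j S (a, {})"

end

theory Submission
  imports Defs
begin


locale slat =
  fixes M :: "'a set" and j :: "'a \<Rightarrow> 'a \<Rightarrow> 'a"
  assumes closed: "a \<in> M \<Longrightarrow> b \<in> M \<Longrightarrow> j a b \<in> M"
    and assoc: "a \<in> M \<Longrightarrow> b \<in> M \<Longrightarrow> c \<in> M \<Longrightarrow> j (j a b) c = j a (j b c)"
    and comm: "a \<in> M \<Longrightarrow> b \<in> M \<Longrightarrow> j a b = j b a"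
    and idem: "a \<in> M \<Longrightarrow> j a a = a"
begin

abbreviation le where "le a b \<equiv> sle j a b"

lemma le_refl: "a \<in> M \<Longrightarrow> le a a"
  by (simp add: sle_def idem)

lemma le_trans: "a \<in> M \<Longrightarrow> b \<in> M \<Longrightarrow> c \<in> M \<Longrightarrow> le a b \<Longrightarrow> le b c \<Longrightarrow> le a c"
  unfolding sle_def by (metis assoc)

lemma le_antisym: "a \<in> M \<Longrightarrow> b \<in> M \<Longrightarrow> le a b \<Longrightarrow> le b a \<Longrightarrow> a = b"
  unfolding sle_def by (metis comm)

lemma upper1: "a \<in> M \<Longrightarrow> b \<in> M \<Longrightarrow> le a (j a b)"
  unfolding sle_def by (metis assoc idem)

lemma upper2: "a \<in> M \<Longrightarrow> b \<in> M \<Longrightarrow> le b (j a b)"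
  using upper1 comm by metis

lemma lub: "a \<in> M \<Longrightarrow> b \<in> M \<Longrightarrow> c \<in> M \<Longrightarrow> le a c \<Longrightarrow> le b c \<Longrightarrow> le (j a b) c"
  unfolding sle_def by (metis assoc)

lemma lub_iff: "a \<in> M \<Longrightarrow> b \<in> M \<Longrightarrow> c \<in> M \<Longrightarrow> le (j a b) c \<longleftrightarrow> le a c \<and> le b c"
  using le_trans[OF _ closed[of a b], of a c] le_trans[OF _ closed[of a b], of b c] upper1[of a b] upper2[of a b] lub[of a b c]
  by blast

lemma join_mono: "a \<in> M \<Longrightarrow> b \<in> M \<Longrightarrow> c \<in> M \<Longrightarrow> d \<in> M \<Longrightarrow> le a c \<Longrightarrow> le b d \<Longrightarrow> le (j a b) (j c d)"
  using lub_iff[of a b "j c d"] lub_iff[of c d "j c d"] le_refl[OF closed[of c d]] le_trans[of a c "j c d"] le_trans[of b d "j c d"] closed[of c d]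
  by blast

lemma joinl_Cons: "xs \<noteq> [] \<Longrightarrow> joinl j (x # xs) = j x (joinl j xs)"
  by (cases xs) auto

lemma joinl_props:
  assumes "xs \<noteq> []" "set xs \<subseteq> M"
  shows "joinl j xs \<in> M \<and> (\<forall>x\<in>set xs. le x (joinl j xs))"
  using assms
proof (induction xs rule: list_nonempty_induct)
  case (single x) then show ?case by (simp add: le_refl)
next
  case (cons x xs)
  then have IH: "joinl j xs \<in> M" "\<forall>z\<in>set xs. le z (joinl j xs)" and xM: "x \<in> M" by auto
  have "le z (j x (joinl j xs))" if "z \<in> set xs" for z
    using le_trans[OF _ IH(1) closed[OF xM IH(1)]] IH(2) that upper2[OF xM IH(1)] cons.prems by auto
  then show ?case using IH xM closed upper1 joinl_Cons[OF cons.hyps(1)] by auto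
qed

lemma joinl_in: "xs \<noteq> [] \<Longrightarrow> set xs \<subseteq> M \<Longrightarrow> joinl j xs \<in> M"
  using joinl_props by blast

lemma joinl_upper: "xs \<noteq> [] \<Longrightarrow> set xs \<subseteq> M \<Longrightarrow> x \<in> set xs \<Longrightarrow> le x (joinl j xs)"
  using joinl_props by blast

lemma joinl_induct:
  assumes "xs \<noteq> []" "set xs \<subseteq> M" "\<forall>x\<in>set xs. P x"
    and "\<And>x y. x \<in> M \<Longrightarrow> y \<in> M \<Longrightarrow> P x \<Longrightarrow> P y \<Longrightarrow> P (j x y)"
  shows "P (joinl j xs)"
  using assms(1-3)
proof (induction xs rule: list_nonempty_induct)
  case (cons x xs)
  then show ?case using assms(4)[of x "joinl j xs"] joinl_in[of xs] joinl_Cons[OF cons.hyps(1)] by auto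
qed auto

lemma joinl_lub: "xs \<noteq> [] \<Longrightarrow> set xs \<subseteq> M \<Longrightarrow> z \<in> M \<Longrightarrow> \<forall>x\<in>set xs. le x z \<Longrightarrow> le (joinl j xs) z"
  using joinl_induct[of xs "\<lambda>x. le x z"] lub by blast

lemma joinl_sub:
  assumes "xs \<noteq> []" "set xs \<subseteq> M" "ys \<noteq> []" "set ys \<subseteq> M"
    "\<forall>x\<in>set xs. \<exists>y\<in>set ys. le x y"
  shows "le (joinl j xs) (joinl j ys)"
  using assms by (meson joinl_in joinl_lub joinl_upper le_trans subsetD)

lemma foldr_props:
  assumes "set xs \<subseteq> M" "a \<in> M"
  shows "foldr j xs a \<in> M \<and> le a (foldr j xs a) \<and> (\<forall>x\<in>set xs. le x (foldr j xs a))"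
  using assms
proof (induction xs)
  case Nil then show ?case by (simp add: le_refl)
next
  case (Cons x xs)
  then have IH: "foldr j xs a \<in> M" "le a (foldr j xs a)" "\<forall>z\<in>set xs. le z (foldr j xs a)" and xM: "x \<in> M" by auto
  have u: "le (foldr j xs a) (j x (foldr j xs a))" using upper2[OF xM IH(1)] .
  have "le z (j x (foldr j xs a))" if "z \<in> set xs" for z
    using le_trans[OF _ IH(1) closed[OF xM IH(1)] _ u] IH(3) that Cons.prems by auto
  moreover have "le a (j x (foldr j xs a))" using le_trans[OF _ IH(1) closed[OF xM IH(1)] IH(2) u] Cons.prems by auto
  ultimately show ?case using IH xM closed upper1 by auto
qed

lemma foldr_induct:
  assumes "set xs \<subseteq> M" "a \<in> M" "P a" "\<forall>x\<in>set xs. P x"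
    and "\<And>x y. x \<in> M \<Longrightarrow> y \<in> M \<Longrightarrow> P x \<Longrightarrow> P y \<Longrightarrow> P (j x y)"
  shows "P (foldr j xs a)"
  using assms(1-4)
proof (induction xs)
  case (Cons x xs)
  then show ?case using assms(5) foldr_props by auto
qed auto

lemma jset_list:
  assumes "finite B"
  obtains xs where "set xs = B" "jset j a B = foldr j xs a"
  using assms unfolding jset_def by (metis (mono_tags, lifting) finite_list someI_ex)

lemma jset_empty: "jset j a {} = a"
  unfolding jset_def by simp

lemma jset_props:
  assumes "finite B" "B \<subseteq> M" "a \<in> M"
  shows "jset j a B \<in> M \<and> le a (jset j a B) \<and> (\<forall>b\<in>B. le b (jset j a B))"
  using assms foldr_props by (metis jset_list)

lemma jset_induct:
  assumes "finite B" "B \<subseteq> M" "a \<in> M" "P a" "\<forall>x\<in>B. P x"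
    and "\<And>x y. x \<in> M \<Longrightarrow> y \<in> M \<Longrightarrow> P x \<Longrightarrow> P y \<Longrightarrow> P (j x y)"
  shows "P (jset j a B)"
  using assms foldr_induct by (metis jset_list)

lemma jset_lub:
  assumes "finite B" "B \<subseteq> M" "a \<in> M" "z \<in> M" "le a z" "\<forall>b\<in>B. le b z"
  shows "le (jset j a B) z"
  using jset_induct[of B a "\<lambda>x. le x z"] assms lub by blast

end



lemma mass_slat:
  assumes ms: "mass M j S"
  shows "slat M j"
proof -
  have 1: "\<forall>a\<in>M. \<forall>b\<in>M. j a b \<in> M" using ms unfolding mass_def by (elim conjE) assumption
  have 2: "\<forall>a\<in>M. \<forall>b\<in>M. \<forall>c\<in>M. j (j a b) c = j a (j b c)" using ms unfolding mass_def by (elim conjE) assumption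
  have 3: "\<forall>a\<in>M. \<forall>b\<in>M. j a b = j b a" using ms unfolding mass_def by (elim conjE) assumption
  have 4: "\<forall>a\<in>M. j a a = a" using ms unfolding mass_def by (elim conjE) assumption
  show ?thesis
  proof
    show "\<And>a b. a \<in> M \<Longrightarrow> b \<in> M \<Longrightarrow> j a b \<in> M" using 1 by blast
    show "\<And>a b c. a \<in> M \<Longrightarrow> b \<in> M \<Longrightarrow> c \<in> M \<Longrightarrow> j (j a b) c = j a (j b c)" using 2 by blast
    show "\<And>a b. a \<in> M \<Longrightarrow> b \<in> M \<Longrightarrow> j a b = j b a" using 3 by blast
    show "\<And>a. a \<in> M \<Longrightarrow> j a a = a" using 4 by blast
  qed
qed

locale mss =
  fixes M :: "'a set" and j :: "'a \<Rightarrow> 'a \<Rightarrow> 'a" and S :: "'a \<Rightarrow> 'a list \<Rightarrow> bool"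
  assumes ms: "mass M j S"
begin

sublocale slat M j using mass_slat[OF ms] .

lemma P_S_dom: "\<forall>a bs. S a bs \<longrightarrow> a \<in> M \<and> bs \<noteq> [] \<and> set bs \<subseteq> M"
  using ms unfolding mass_def by (elim conjE) assumption
lemma P_M1: "\<forall>a\<in>M. S a [a]"
  using ms unfolding mass_def by (elim conjE) assumption
lemma P_M2: "\<forall>a b bs c. S a (b # bs) \<and> S b [c] \<longrightarrow> S a (c # bs)"
  using ms unfolding mass_def by (elim conjE) assumption
lemma P_M3: "\<forall>a\<in>M. \<forall>b cs. sle j a b \<and> S b cs \<longrightarrow> S a cs"
  using ms unfolding mass_def by (elim conjE) assumption
lemma P_M4: "\<forall>a bs bs'. S a bs \<and> mset bs' = mset bs \<longrightarrow> S a bs'"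
  using ms unfolding mass_def by (elim conjE) assumption
lemma P_M5: "\<forall>a bs b. S a (bs @ [b, b]) \<longrightarrow> S a (bs @ [b])"
  using ms unfolding mass_def by (elim conjE) assumption
lemma P_M6: "\<forall>a bs b. S a bs \<and> b \<in> M \<longrightarrow> S a (bs @ [b])"
  using ms unfolding mass_def by (elim conjE) assumption
lemma P_M7: "\<forall>a a1 bs. S a bs \<and> S a1 bs \<longrightarrow> S (j a a1) bs"
  using ms unfolding mass_def by (elim conjE) assumption

lemma S_dom: "S a bs \<Longrightarrow> a \<in> M \<and> bs \<noteq> [] \<and> set bs \<subseteq> M"
  using P_S_dom by blast
lemma M1: "a \<in> M \<Longrightarrow> S a [a]"
  using P_M1 by blast
lemma M2: "S a (b # bs) \<Longrightarrow> S b [c] \<Longrightarrow> S a (c # bs)"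
  using P_M2 by blast
lemma M3: "a \<in> M \<Longrightarrow> le a b \<Longrightarrow> S b cs \<Longrightarrow> S a cs"
  using P_M3 by blast
lemma M4: "S a bs \<Longrightarrow> mset bs' = mset bs \<Longrightarrow> S a bs'"
  using P_M4 by blast
lemma M5: "S a (bs @ [b, b]) \<Longrightarrow> S a (bs @ [b])"
  using P_M5 by blast
lemma M6: "S a bs \<Longrightarrow> b \<in> M \<Longrightarrow> S a (bs @ [b])"
  using P_M6 by blast
lemma M7: "S a bs \<Longrightarrow> S a1 bs \<Longrightarrow> S (j a a1) bs"
  using P_M7 by blast

lemma S_trans1: "S a [b] \<Longrightarrow> S b [c] \<Longrightarrow> S a [c]"
  using M2[of a b "[]" c] by simp

lemma S_app: "S a xs \<Longrightarrow> set ys \<subseteq> M \<Longrightarrow> S a (xs @ ys)"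
proof (induction ys arbitrary: xs)
  case (Cons y ys)
  have "S a (xs @ [y])" using M6 Cons.prems by auto
  then have "S a ((xs @ [y]) @ ys)" using Cons.IH[of "xs @ [y]"] Cons.prems by simp
  then show ?case by simp
qed simp

lemma S_dedup: "S a (xs @ ys) \<Longrightarrow> set xs \<subseteq> set ys \<Longrightarrow> S a ys"
proof (induction xs)
  case (Cons x xs)
  have xin: "x \<in> set (xs @ ys)" using Cons.prems by auto
  let ?r = "remove1 x (xs @ ys)"
  have m1: "mset (xs @ ys) = mset ?r + {#x#}" using xin by simp
  have "mset (?r @ [x, x]) = mset (x # xs @ ys)" using m1 by simp
  then have "S a (?r @ [x, x])" using M4[OF Cons.prems(1), of "?r @ [x, x]"] by simp
  then have "S a (?r @ [x])" by (rule M5)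
  moreover have "mset (xs @ ys) = mset (?r @ [x])" using m1 by simp
  ultimately have "S a (xs @ ys)" by (rule M4)
  then show ?case using Cons by auto
qed simp

lemma S_set: "S a xs \<Longrightarrow> set xs = set ys \<Longrightarrow> S a ys"
proof -
  assume h: "S a xs" "set xs = set ys"
  have "set ys \<subseteq> M" using S_dom[OF h(1)] h(2) by simp
  then show ?thesis using S_app[OF h(1)] S_dedup[of a xs ys] h(2) by simp
qed

lemma S_sub: "S a xs \<Longrightarrow> set xs \<subseteq> set ys \<Longrightarrow> set ys \<subseteq> M \<Longrightarrow> S a ys"
  using S_app[of a xs ys] S_dedup[of a xs ys] by auto

lemma S_elem: "x \<in> set ys \<Longrightarrow> set ys \<subseteq> M \<Longrightarrow> S x ys"
  using S_sub[OF M1[of x], of ys] by auto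

lemma S_cut_aux:
  "S a (xs @ zs) \<Longrightarrow> \<forall>x\<in>set xs. \<exists>y\<in>E. S x [y] \<Longrightarrow> \<exists>ys. set ys \<subseteq> E \<and> S a (ys @ zs)"
proof (induction xs arbitrary: zs)
  case Nil then show ?case by (intro exI[of _ "[]"]) simp
next
  case (Cons x xs)
  obtain y where y: "y \<in> E" "S x [y]" using Cons.prems by auto
  have "S a (y # xs @ zs)" using M2[of a x "xs @ zs" y] Cons.prems y by simp
  moreover have "mset (xs @ (zs @ [y])) = mset (y # xs @ zs)" by simp
  ultimately have "S a (xs @ (zs @ [y]))" by (rule M4)
  then have "\<exists>ys. set ys \<subseteq> E \<and> S a (ys @ zs @ [y])" using Cons.IH[of "zs @ [y]"] Cons.prems(2) by simp
  then obtain ys where ys: "set ys \<subseteq> E" "S a (ys @ zs @ [y])" by blast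
  moreover have "mset ((ys @ [y]) @ zs) = mset (ys @ zs @ [y])" by simp
  ultimately have "S a ((ys @ [y]) @ zs)" using M4 by blast
  then show ?case using ys y by (intro exI[of _ "ys @ [y]"]) auto
qed

lemma S_cut:
  assumes "S a xs" "\<forall>x\<in>set xs. \<exists>y\<in>set es. S x [y]" "set es \<subseteq> M"
  shows "S a es"
proof -
  obtain ys where ys: "set ys \<subseteq> set es" "S a ys" using S_cut_aux[of a xs "[]" "set es"] assms by auto
  show ?thesis using S_sub[OF ys(2) ys(1) assms(3)] .
qed

end

lemma closure_regular:
  fixes T :: "'t set" and jt K and St
  assumes sl: "slat T jt"
   and Kin: "\<forall>x\<in>T. K x \<in> T" and ext: "\<forall>x\<in>T. sle jt x (K x)"
   and mono: "\<forall>x\<in>T. \<forall>y\<in>T. sle jt x y \<longrightarrow> sle jt (K x) (K y)"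
   and idm: "\<forall>x\<in>T. sle jt (K (K x)) (K x)"
   and Sdef: "\<And>a bs. St a bs \<longleftrightarrow> (a\<in>T \<and> bs\<noteq>[] \<and> set bs \<subseteq> T \<and> sle jt a (joinl jt (map K bs)))"
  shows "regular T jt St \<and> (\<forall>x\<in>T. Kop T jt St x = K x)"
proof -
  interpret slat T jt by (rule sl)
  have Kc: "le (K x) (K y)" if "x \<in> T" "y \<in> T" "le x (K y)" for x y
  proof -
    have "le (K x) (K (K y))" using mono Kin that by blast
    moreover have "le (K (K y)) (K y)" using idm that by blast
    ultimately show ?thesis using le_trans[of "K x" "K (K y)" "K y"] Kin that by blast
  qed
  have jl: "joinl jt (map K bs) \<in> T" if "bs \<noteq> []" "set bs \<subseteq> T" for bs
    using joinl_in[of "map K bs"] that Kin by auto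
  have jsub: "le (joinl jt (map K xs)) (joinl jt (map K ys))"
    if "xs \<noteq> []" "set xs \<subseteq> T" "ys \<noteq> []" "set ys \<subseteq> T" "\<forall>x\<in>set xs. \<exists>y\<in>set ys. le (K x) (K y)" for xs ys
    using joinl_sub[of "map K xs" "map K ys"] that Kin by auto
  have ma: "mass T jt St"
    unfolding mass_def
  proof (intro conjI)
    show "\<forall>a\<in>T. \<forall>b\<in>T. jt a b \<in> T" using closed by blast
    show "\<forall>a\<in>T. \<forall>b\<in>T. \<forall>c\<in>T. jt (jt a b) c = jt a (jt b c)" using assoc by blast
    show "\<forall>a\<in>T. \<forall>b\<in>T. jt a b = jt b a" using comm by blast
    show "\<forall>a\<in>T. jt a a = a" using idem by blast
    show "\<forall>a bs. St a bs \<longrightarrow> a \<in> T \<and> bs \<noteq> [] \<and> set bs \<subseteq> T" using Sdef by blast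
    show "\<forall>a\<in>T. St a [a]" using Sdef ext by simp
    show "\<forall>a b bs c. St a (b # bs) \<and> St b [c] \<longrightarrow> St a (c # bs)"
    proof (intro allI impI)
      fix a b bs c assume that: "St a (b # bs) \<and> St b [c]"
      have h: "a \<in> T" "b \<in> T" "set bs \<subseteq> T" "c \<in> T" "le a (joinl jt (map K (b # bs)))" "le b (K c)"
        using that Sdef by auto
      have "le (K b) (K c)" using Kc h by auto
      then have "le (joinl jt (map K (b # bs))) (joinl jt (map K (c # bs)))"
        using jsub[of "b # bs" "c # bs"] h le_refl Kin by auto
      then show "St a (c # bs)" using h Sdef le_trans jl by (metis insert_subset list.discI list.simps(15))
    qed
    show "\<forall>a\<in>T. \<forall>b cs. le a b \<and> St b cs \<longrightarrow> St a cs"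
    proof (intro ballI allI impI)
      fix a b cs assume a: "a \<in> T" and h: "le a b \<and> St b cs"
      have h2: "b \<in> T" "cs \<noteq> []" "set cs \<subseteq> T" "le b (joinl jt (map K cs))" using h Sdef by auto
      have "le a (joinl jt (map K cs))" using le_trans[OF a h2(1) jl[OF h2(2) h2(3)]] h h2 by blast
      then show "St a cs" using Sdef a h2 by auto
    qed
    show "\<forall>a bs bs'. St a bs \<and> mset bs' = mset bs \<longrightarrow> St a bs'"
    proof (intro allI impI)
      fix a bs bs' assume that: "St a bs \<and> mset bs' = mset bs"
      have e: "set bs' = set bs" using that by (metis set_mset_mset)
      have h: "a \<in> T" "bs \<noteq> []" "set bs \<subseteq> T" "le a (joinl jt (map K bs))" "bs' \<noteq> []"
        using that Sdef e by auto
      have "\<forall>x\<in>set bs. \<exists>y\<in>set bs'. le (K x) (K y)" using h e le_refl Kin by blast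
      then have "le (joinl jt (map K bs)) (joinl jt (map K bs'))"
        using jsub[of bs bs'] h e by auto
      moreover have "joinl jt (map K bs') \<in> T" using jl[of bs'] h e by auto
      ultimately have "le a (joinl jt (map K bs'))" using h le_trans jl by blast
      then show "St a bs'" using h Sdef e by auto
    qed
    show "\<forall>a bs b. St a (bs @ [b, b]) \<longrightarrow> St a (bs @ [b])"
    proof (intro allI impI)
      fix a bs b assume that: "St a (bs @ [b, b])"
      have e: "set (bs @ [b, b]) = set (bs @ [b])" by auto
      have h: "a \<in> T" "set (bs @ [b, b]) \<subseteq> T" "le a (joinl jt (map K (bs @ [b, b])))"
        using that Sdef e by auto
      have "\<forall>x\<in>set (bs @ [b, b]). \<exists>y\<in>set (bs @ [b]). le (K x) (K y)" using h e le_refl Kin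
        by (metis subsetD)
      then have "le (joinl jt (map K (bs @ [b, b]))) (joinl jt (map K (bs @ [b])))"
        using jsub[of "bs @ [b, b]" "bs @ [b]"] h e by auto
      moreover have "joinl jt (map K (bs @ [b])) \<in> T" using jl[of "bs @ [b]"] h e by auto
      moreover have "joinl jt (map K (bs @ [b, b])) \<in> T" using jl[of "bs @ [b, b]"] h e by auto
      ultimately have "le a (joinl jt (map K (bs @ [b])))" using h le_trans by blast
      then show "St a (bs @ [b])" using h Sdef e by auto
    qed
    show "\<forall>a bs b. St a bs \<and> b \<in> T \<longrightarrow> St a (bs @ [b])"
    proof (intro allI impI)
      fix a bs b assume that: "St a bs \<and> b \<in> T"
      have h: "a \<in> T" "bs \<noteq> []" "set bs \<subseteq> T" "b \<in> T" "le a (joinl jt (map K bs))"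
        using that Sdef by auto
      have "le (joinl jt (map K bs)) (joinl jt (map K (bs @ [b])))"
        using jsub[of bs "bs @ [b]"] h le_refl Kin by auto
      moreover have "joinl jt (map K (bs @ [b])) \<in> T" using jl[of "bs @ [b]"] h by auto
      ultimately have "le a (joinl jt (map K (bs @ [b])))" using h le_trans jl by blast
      then show "St a (bs @ [b])" using h Sdef by auto
    qed
    show "\<forall>a a1 bs. St a bs \<and> St a1 bs \<longrightarrow> St (jt a a1) bs"
    proof (intro allI impI)
      fix a a1 bs assume h: "St a bs \<and> St a1 bs"
      have h2: "a \<in> T" "a1 \<in> T" "bs \<noteq> []" "set bs \<subseteq> T" "le a (joinl jt (map K bs))" "le a1 (joinl jt (map K bs))"
        using h Sdef by auto
      have "le (jt a a1) (joinl jt (map K bs))" using lub[OF h2(1) h2(2) jl[OF h2(3) h2(4)] h2(5) h2(6)] .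
      then show "St (jt a a1) bs" using Sdef h2 closed by auto
    qed
  qed
  have Kspec: "K x \<in> T \<and> St (K x) [x] \<and> (\<forall>z\<in>T. St z [x] \<longrightarrow> le z (K x))" if "x \<in> T" for x
    using that Kin Sdef le_refl by simp
  have Kop: "Kop T jt St x = K x" if "x \<in> T" for x
    unfolding Kop_def
  proof (rule the_equality)
    show "K x \<in> T \<and> St (K x) [x] \<and> (\<forall>z\<in>T. St z [x] \<longrightarrow> le z (K x))" using Kspec that .
    show "y = K x" if "y \<in> T \<and> St y [x] \<and> (\<forall>z\<in>T. St z [x] \<longrightarrow> le z y)" for y
      using that Kspec[OF \<open>x \<in> T\<close>] le_antisym by blast
  qed
  have pr: "principal T jt St"
    unfolding principal_def using ma Kspec by blast
  have Sr: "St a bs \<longleftrightarrow> (a\<in>T \<and> bs\<noteq>[] \<and> set bs \<subseteq> T \<and> le a (joinl jt (map (Kop T jt St) bs)))" for a bs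
  proof (cases "set bs \<subseteq> T")
    case True
    then have meq: "map (Kop T jt St) bs = map K bs" using Kop by (simp add: map_eq_conv subset_iff)
    show ?thesis unfolding meq using Sdef True by simp
  next
    case False then show ?thesis using Sdef by simp
  qed
  then have "regular T jt St" unfolding regular_def using pr by blast
  then show ?thesis using Kop by blast
qed

lemma (in mss) regular_props_in:
  assumes rg: "regular M j S"
  shows "slat M j \<and> (\<forall>x\<in>M. Kop M j S x \<in> M) \<and> (\<forall>x\<in>M. sle j x (Kop M j S x))
    \<and> (\<forall>x\<in>M. \<forall>y\<in>M. sle j x y \<longrightarrow> sle j (Kop M j S x) (Kop M j S y))
    \<and> (\<forall>x\<in>M. sle j (Kop M j S (Kop M j S x)) (Kop M j S x))
    \<and> (\<forall>x\<in>M. \<forall>y\<in>M. sle j x (Kop M j S y) \<longrightarrow> sle j (Kop M j S x) (Kop M j S y))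
    \<and> (\<forall>a bs. S a bs \<longleftrightarrow> (a\<in>M \<and> bs\<noteq>[] \<and> set bs \<subseteq> M \<and> sle j a (joinl j (map (Kop M j S) bs))))"
proof -
  have pr: "principal M j S" using rg unfolding regular_def by (elim conjE) assumption
  let ?K = "Kop M j S"
  have Kspec: "?K x \<in> M \<and> S (?K x) [x] \<and> (\<forall>z\<in>M. S z [x] \<longrightarrow> le z (?K x))" if "x \<in> M" for x
  proof -
    have ex: "\<exists>y\<in>M. S y [x] \<and> (\<forall>z\<in>M. S z [x] \<longrightarrow> le z y)"
      using pr[unfolded principal_def, THEN conjunct2] that by (rule bspec)
    obtain y where y: "y \<in> M" "S y [x]" "\<forall>z\<in>M. S z [x] \<longrightarrow> le z y"
      using ex by (elim bexE conjE)
    have "?K x = y" unfolding Kop_def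
    proof (rule the_equality)
      show "y \<in> M \<and> S y [x] \<and> (\<forall>z\<in>M. S z [x] \<longrightarrow> le z y)" using y by blast
      show "y' = y" if "y' \<in> M \<and> S y' [x] \<and> (\<forall>z\<in>M. S z [x] \<longrightarrow> le z y')" for y'
        using that y le_antisym by blast
    qed
    then show ?thesis using y by simp
  qed
  have Sreg': "\<forall>a bs. S a bs \<longleftrightarrow> (a\<in>M \<and> bs\<noteq>[] \<and> set bs \<subseteq> M \<and> le a (joinl j (map ?K bs)))"
    using rg unfolding regular_def by (elim conjE) assumption
  have Sreg: "\<And>a bs. S a bs \<longleftrightarrow> (a\<in>M \<and> bs\<noteq>[] \<and> set bs \<subseteq> M \<and> le a (joinl j (map ?K bs)))"
    by (rule Sreg'[rule_format])
  have S1: "S a [b] \<longleftrightarrow> a \<in> M \<and> b \<in> M \<and> le a (?K b)" for a b using Sreg[of a "[b]"] by auto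
  have ext: "\<forall>x\<in>M. le x (?K x)"
  proof
    fix x assume "x \<in> M"
    then have "S x [x]" by (rule M1)
    then show "le x (?K x)" using S1[THEN iffD1] by blast
  qed
  have Kc: "le (?K x) (?K y)" if "x \<in> M" "y \<in> M" "le x (?K y)" for x y
  proof -
    have "S x [y]" using S1[THEN iffD2] that by blast
    moreover have "S (?K x) [x]" using Kspec[OF that(1)] by (elim conjE)
    ultimately have "S (?K x) [y]" using S_trans1 by blast
    then show ?thesis using S1[THEN iffD1] by blast
  qed
  have hin: "\<forall>x\<in>M. ?K x \<in> M" using Kspec by blast
  have mono: "\<forall>x\<in>M. \<forall>y\<in>M. le x y \<longrightarrow> le (?K x) (?K y)"
  proof (intro ballI impI)
    fix x y assume h: "x \<in> M" "y \<in> M" "le x y"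
    have "le x (?K y)" using le_trans[OF h(1) h(2) _ h(3)] ext hin h by blast
    then show "le (?K x) (?K y)" using Kc h by blast
  qed
  have idm: "\<forall>x\<in>M. le (?K (?K x)) (?K x)"
  proof
    fix x assume "x \<in> M"
    then show "le (?K (?K x)) (?K x)" using Kc[of "?K x" x] le_refl hin by blast
  qed
  have Kc': "\<forall>x\<in>M. \<forall>y\<in>M. le x (?K y) \<longrightarrow> le (?K x) (?K y)" using Kc by blast
  show ?thesis using slat_axioms hin ext mono idm Kc' Sreg' by (intro conjI) assumption+
qed

lemma regular_props:
  assumes rg: "regular T jt St"
  shows "slat T jt \<and> (\<forall>x\<in>T. Kop T jt St x \<in> T) \<and> (\<forall>x\<in>T. sle jt x (Kop T jt St x))
    \<and> (\<forall>x\<in>T. \<forall>y\<in>T. sle jt x y \<longrightarrow> sle jt (Kop T jt St x) (Kop T jt St y))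
    \<and> (\<forall>x\<in>T. sle jt (Kop T jt St (Kop T jt St x)) (Kop T jt St x))
    \<and> (\<forall>x\<in>T. \<forall>y\<in>T. sle jt x (Kop T jt St y) \<longrightarrow> sle jt (Kop T jt St x) (Kop T jt St y))
    \<and> (\<forall>a bs. St a bs \<longleftrightarrow> (a\<in>T \<and> bs\<noteq>[] \<and> set bs \<subseteq> T \<and> sle jt a (joinl jt (map (Kop T jt St) bs))))"
proof -
  have pr: "principal T jt St" using rg unfolding regular_def by (elim conjE) assumption
  have ms: "mass T jt St" using pr unfolding principal_def by (elim conjE) assumption
  show ?thesis using mss.regular_props_in[OF mss.intro[OF ms] rg] .
qed



context mss
begin

definition Sset where "Sset d D \<longleftrightarrow> (\<exists>ds. set ds = D \<and> S d ds)"
definition A1 where "A1 a c D \<longleftrightarrow> le a c \<or> (\<exists>d\<in>M. Sset d D \<and> le a (j c d))"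
definition pr where "pr p q \<longleftrightarrow> A1 (fst p) (fst q) (snd q) \<and> (\<forall>b\<in>snd p. \<exists>d\<in>snd q. S b [d])"
definition pj where "pj p q = (j (fst p) (fst q), snd p \<union> snd q)"
definition kk where "kk p = (fst p, {jset j (fst p) (snd p)})"

abbreviation "P \<equiv> Pdom M"

lemma P_iff[simp]: "(a, B) \<in> P \<longleftrightarrow> a \<in> M \<and> B \<subseteq> M \<and> finite B"
  by (simp add: Pdom_def)

lemma Sset_dom: "Sset d D \<Longrightarrow> d \<in> M \<and> D \<noteq> {} \<and> D \<subseteq> M \<and> finite D"
  unfolding Sset_def using S_dom by auto

lemma Sset_list: "Sset d D \<Longrightarrow> set ds = D \<Longrightarrow> S d ds"
  unfolding Sset_def using S_set by auto

lemma Sset_elem: "x \<in> D \<Longrightarrow> finite D \<Longrightarrow> D \<subseteq> M \<Longrightarrow> Sset x D"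
  unfolding Sset_def using S_elem by (metis finite_list)

lemma Sset_join: "Sset a D \<Longrightarrow> Sset b D \<Longrightarrow> Sset (j a b) D"
  unfolding Sset_def using S_set M7 by metis

lemma Sset_le: "a \<in> M \<Longrightarrow> le a b \<Longrightarrow> Sset b D \<Longrightarrow> Sset a D"
  unfolding Sset_def using M3 by blast

lemma Sset_cut: "Sset a D \<Longrightarrow> \<forall>x\<in>D. \<exists>y\<in>E. S x [y] \<Longrightarrow> finite E \<Longrightarrow> E \<subseteq> M \<Longrightarrow> Sset a E"
proof -
  assume h: "Sset a D" "\<forall>x\<in>D. \<exists>y\<in>E. S x [y]" "finite E" "E \<subseteq> M"
  obtain ds where ds: "set ds = D" "S a ds" using h(1) unfolding Sset_def by blast
  obtain es where es: "set es = E" using h(3) finite_list by blast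
  have "S a es" using S_cut[OF ds(2)] h ds es by auto
  then show ?thesis unfolding Sset_def using es by blast
qed

lemma Sset_single: "Sset a {b} \<longleftrightarrow> S a [b]"
  unfolding Sset_def using S_set by (metis empty_set list.simps(15))

lemma Sset_empty: "\<not> Sset a {}"
  using Sset_dom by blast

lemma S1_le: "a \<in> M \<Longrightarrow> b \<in> M \<Longrightarrow> le a b \<Longrightarrow> S a [b]"
  using M3 M1 by blast

lemma prec_eq:
  assumes "p \<in> P" "q \<in> P"
  shows "prec M j S p q \<longleftrightarrow> pr p q"
proof -
  obtain a B where p: "p = (a, B)" by fastforce
  obtain c D where q: "q = (c, D)" by fastforce
  have h: "a \<in> M" "B \<subseteq> M" "finite B" "c \<in> M" "D \<subseteq> M" "finite D" using assms p q by auto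
  have "(if D = {} then le a c
      else (\<exists>d\<in>M. \<exists>ds. set ds = D \<and> distinct ds \<and> S d ds \<and> le a (j c d))) \<longleftrightarrow> A1 a c D"
  proof (cases "D = {}")
    case True then show ?thesis unfolding A1_def using Sset_empty by auto
  next
    case False
    obtain ds where ds: "set ds = D" "distinct ds" using h(6) finite_distinct_list by blast
    show ?thesis
    proof
      assume "if D = {} then le a c else (\<exists>d\<in>M. \<exists>ds. set ds = D \<and> distinct ds \<and> S d ds \<and> le a (j c d))"
      then show "A1 a c D" using False unfolding A1_def Sset_def by auto
    next
      assume "A1 a c D"
      then consider "le a c" | d where "d \<in> M" "Sset d D" "le a (j c d)" unfolding A1_def by blast
      then show "if D = {} then le a c else (\<exists>d\<in>M. \<exists>ds. set ds = D \<and> distinct ds \<and> S d ds \<and> le a (j c d))"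
      proof cases
        case 1
        obtain x where x: "x \<in> D" using False by blast
        have xM: "x \<in> M" using x h by auto
        have "S x ds" using S_elem[of x ds] ds x h by auto
        moreover have "le a (j c x)" using le_trans[OF h(1) h(4) closed[OF h(4) xM] 1 upper1[OF h(4) xM]] .
        ultimately show ?thesis using False ds xM by auto
      next
        case 2
        have "S d ds" using Sset_list[OF 2(2) ds(1)] .
        then have "\<exists>d\<in>M. \<exists>ds. set ds = D \<and> distinct ds \<and> S d ds \<and> le a (j c d)" using 2 ds by blast
        then show ?thesis using False by simp
      qed
    qed
  qed
  note e1 = this
  have e2: "prec M j S p q \<longleftrightarrow> (if D = {} then le a c
      else (\<exists>d\<in>M. \<exists>ds. set ds = D \<and> distinct ds \<and> S d ds \<and> le a (j c d))) \<and> (\<forall>b\<in>B. \<exists>d\<in>D. S b [d])"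
    unfolding prec_def p q fst_conv snd_conv by (rule refl)
  have e3: "pr p q \<longleftrightarrow> A1 a c D \<and> (\<forall>b\<in>B. \<exists>d\<in>D. S b [d])"
    unfolding pr_def p q fst_conv snd_conv by (rule refl)
  show ?thesis unfolding e2 e3 e1 by (rule refl)
qed

lemma pr_refl: "p \<in> P \<Longrightarrow> pr p p"
proof -
  assume pP: "p \<in> P"
  obtain a B where p: "p = (a, B)" by fastforce
  have h: "a \<in> M" "B \<subseteq> M" using pP p by auto
  have "\<forall>b\<in>B. \<exists>d\<in>B. S b [d]" using h M1 by blast
  then show ?thesis unfolding pr_def A1_def using p le_refl h by auto
qed

lemma pr_trans:
  assumes "p \<in> P" "q \<in> P" "r \<in> P" "pr p q" "pr q r"
  shows "pr p r"
proof -
  obtain a B where p: "p = (a, B)" by fastforce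
  obtain c D where q: "q = (c, D)" by fastforce
  obtain e F where r: "r = (e, F)" by fastforce
  have h: "a \<in> M" "B \<subseteq> M" "finite B" "c \<in> M" "D \<subseteq> M" "finite D" "e \<in> M" "F \<subseteq> M" "finite F"
    using assms p q r by auto
  have pq: "A1 a c D" "\<forall>b\<in>B. \<exists>d\<in>D. S b [d]" using assms(4) p q unfolding pr_def by auto
  have qr: "A1 c e F" "\<forall>b\<in>D. \<exists>d\<in>F. S b [d]" using assms(5) q r unfolding pr_def by auto
  have a2: "\<forall>b\<in>B. \<exists>d\<in>F. S b [d]" using pq(2) qr(2) S_trans1 by blast
  have cut: "Sset d F" if "Sset d D" for d using Sset_cut[OF that qr(2) h(9) h(8)] .
  have "A1 a e F"
  proof -
    consider "le a c" | d where "d \<in> M" "Sset d D" "le a (j c d)" using pq(1) unfolding A1_def by blast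
    then show ?thesis
    proof cases
      case 1
      consider "le c e" | f where "f \<in> M" "Sset f F" "le c (j e f)" using qr(1) unfolding A1_def by blast
      then show ?thesis
      proof cases
        case 1 then show ?thesis unfolding A1_def using le_trans[OF h(1) h(4) h(7) \<open>le a c\<close> 1] by blast
      next
        case 2 then show ?thesis unfolding A1_def using le_trans[OF h(1) h(4) closed[OF h(7) 2(1)] \<open>le a c\<close> 2(3)] by blast
      qed
    next
      case 2
      note d = 2
      consider "le c e" | f where "f \<in> M" "Sset f F" "le c (j e f)" using qr(1) unfolding A1_def by blast
      then show ?thesis
      proof cases
        case 1
        have "le (j c d) (j e d)" using join_mono[OF h(4) d(1) h(7) d(1) 1 le_refl[OF d(1)]] .
        then have "le a (j e d)" using le_trans[OF h(1) closed[OF h(4) d(1)] closed[OF h(7) d(1)] d(3)] by blast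
        then show ?thesis unfolding A1_def using cut[OF d(2)] d(1) by blast
      next
        case 2
        have fd: "j f d \<in> M" using closed 2 d by blast
        have "le (j e f) (j e (j f d))" using join_mono[OF h(7) 2(1) h(7) fd le_refl[OF h(7)] upper1[OF 2(1) d(1)]] .
        then have c1: "le c (j e (j f d))" using le_trans[OF h(4) closed[OF h(7) 2(1)] closed[OF h(7) fd] 2(3)] by blast
        have "le d (j e (j f d))" using le_trans[OF d(1) fd closed[OF h(7) fd] upper2[OF 2(1) d(1)] upper2[OF h(7) fd]] .
        then have "le (j c d) (j e (j f d))" using lub[OF h(4) d(1) closed[OF h(7) fd] c1] by blast
        then have "le a (j e (j f d))" using le_trans[OF h(1) closed[OF h(4) d(1)] closed[OF h(7) fd] d(3)] by blast
        moreover have "Sset (j f d) F" using Sset_join[OF 2(2) cut[OF d(2)]] .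
        ultimately show ?thesis unfolding A1_def using fd by blast
      qed
    qed
  qed
  then show ?thesis unfolding pr_def using p r a2 by simp
qed

lemma pj_in: "p \<in> P \<Longrightarrow> q \<in> P \<Longrightarrow> pj p q \<in> P"
  unfolding pj_def Pdom_def using closed by auto

lemma kk_in: "p \<in> P \<Longrightarrow> kk p \<in> P"
  unfolding kk_def Pdom_def using jset_props by auto

lemma fstP: "p \<in> P \<Longrightarrow> fst p \<in> M \<and> snd p \<subseteq> M \<and> finite (snd p)"
  unfolding Pdom_def by auto

lemma pr_upper1: "p \<in> P \<Longrightarrow> q \<in> P \<Longrightarrow> pr p (pj p q)"
proof -
  assume h: "p \<in> P" "q \<in> P"
  have "\<forall>b\<in>snd p. \<exists>d\<in>snd p \<union> snd q. S b [d]" using fstP[OF h(1)] M1 by blast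
  moreover have "le (fst p) (j (fst p) (fst q))" using upper1 fstP h by blast
  ultimately show ?thesis unfolding pr_def pj_def A1_def by simp
qed

lemma pr_upper2: "p \<in> P \<Longrightarrow> q \<in> P \<Longrightarrow> pr q (pj p q)"
proof -
  assume h: "p \<in> P" "q \<in> P"
  have "\<forall>b\<in>snd q. \<exists>d\<in>snd p \<union> snd q. S b [d]" using fstP[OF h(2)] M1 by blast
  moreover have "le (fst q) (j (fst p) (fst q))" using upper2 fstP h by blast
  ultimately show ?thesis unfolding pr_def pj_def A1_def by simp
qed

lemma pr_lub:
  assumes "p \<in> P" "q \<in> P" "r \<in> P" "pr p r" "pr q r"
  shows "pr (pj p q) r"
proof -
  obtain a B where p: "p = (a, B)" by fastforce
  obtain c D where q: "q = (c, D)" by fastforce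
  obtain e F where r: "r = (e, F)" by fastforce
  have h: "a \<in> M" "c \<in> M" "e \<in> M" using assms p q r by auto
  have pr1: "A1 a e F" "\<forall>b\<in>B. \<exists>d\<in>F. S b [d]" using assms(4) p r unfolding pr_def by auto
  have pr2: "A1 c e F" "\<forall>b\<in>D. \<exists>d\<in>F. S b [d]" using assms(5) q r unfolding pr_def by auto
  have "A1 (j a c) e F"
  proof -
    consider "le a e" | d where "d \<in> M" "Sset d F" "le a (j e d)" using pr1(1) unfolding A1_def by blast
    then show ?thesis
    proof cases
      case 1
      consider "le c e" | f where "f \<in> M" "Sset f F" "le c (j e f)" using pr2(1) unfolding A1_def by blast
      then show ?thesis
      proof cases
        case 1 then show ?thesis unfolding A1_def using lub[OF h(1) h(2) h(3) \<open>le a e\<close> 1] by blast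
      next
        case 2
        have "le a (j e f)" using le_trans[OF h(1) h(3) closed[OF h(3) 2(1)] \<open>le a e\<close> upper1[OF h(3) 2(1)]] .
        then show ?thesis unfolding A1_def using lub[OF h(1) h(2) closed[OF h(3) 2(1)] _ 2(3)] 2 by blast
      qed
    next
      case 2
      note d = 2
      consider "le c e" | f where "f \<in> M" "Sset f F" "le c (j e f)" using pr2(1) unfolding A1_def by blast
      then show ?thesis
      proof cases
        case 1
        have "le c (j e d)" using le_trans[OF h(2) h(3) closed[OF h(3) d(1)] 1 upper1[OF h(3) d(1)]] .
        then show ?thesis unfolding A1_def using lub[OF h(1) h(2) closed[OF h(3) d(1)] d(3)] d by blast
      next
        case 2
        have fd: "j d f \<in> M" using closed 2 d by blast
        have e1: "le (j e d) (j e (j d f))" using join_mono[OF h(3) d(1) h(3) fd le_refl[OF h(3)] upper1[OF d(1) 2(1)]] .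
        have e2: "le (j e f) (j e (j d f))" using join_mono[OF h(3) 2(1) h(3) fd le_refl[OF h(3)] upper2[OF d(1) 2(1)]] .
        have "le a (j e (j d f))" using le_trans[OF h(1) closed[OF h(3) d(1)] closed[OF h(3) fd] d(3) e1] .
        moreover have "le c (j e (j d f))" using le_trans[OF h(2) closed[OF h(3) 2(1)] closed[OF h(3) fd] 2(3) e2] .
        ultimately have "le (j a c) (j e (j d f))" using lub[OF h(1) h(2) closed[OF h(3) fd]] by blast
        moreover have "Sset (j d f) F" using Sset_join[OF d(2) 2(2)] .
        ultimately show ?thesis unfolding A1_def using fd by blast
      qed
    qed
  qed
  then show ?thesis unfolding pr_def pj_def using p q r pr1(2) pr2(2) by auto
qed

lemma pr_pj_mono:
  assumes "p \<in> P" "q \<in> P" "p' \<in> P" "q' \<in> P" "pr p p'" "pr q q'"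
  shows "pr (pj p q) (pj p' q')"
proof -
  have i: "pj p' q' \<in> P" using pj_in assms by blast
  have "pr p (pj p' q')" using pr_trans[OF assms(1) assms(3) i assms(5) pr_upper1[OF assms(3) assms(4)]] .
  moreover have "pr q (pj p' q')" using pr_trans[OF assms(2) assms(4) i assms(6) pr_upper2[OF assms(3) assms(4)]] .
  ultimately show ?thesis using pr_lub[OF assms(1) assms(2) i] by blast
qed

lemma pr_kk_ext: "p \<in> P \<Longrightarrow> pr p (kk p)"
proof -
  assume pP: "p \<in> P"
  obtain a B where p: "p = (a, B)" by fastforce
  have h: "a \<in> M" "B \<subseteq> M" "finite B" using pP p by auto
  have "S b [jset j a B]" if "b \<in> B" for b
    using S1_le jset_props[OF h(3) h(2) h(1)] that h by blast
  then show ?thesis unfolding pr_def kk_def A1_def using p le_refl h by auto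
qed

lemma pr_kk_mono:
  assumes "p \<in> P" "q \<in> P" "pr p q"
  shows "pr (kk p) (kk q)"
proof -
  obtain a B where p: "p = (a, B)" by fastforce
  obtain c D where q: "q = (c, D)" by fastforce
  have h: "a \<in> M" "B \<subseteq> M" "finite B" "c \<in> M" "D \<subseteq> M" "finite D" using assms p q by auto
  have pq: "A1 a c D" "\<forall>b\<in>B. \<exists>d\<in>D. S b [d]" using assms(3) p q unfolding pr_def by auto
  define wc where "wc = jset j c D"
  have wc: "wc \<in> M" "le c wc" "\<forall>b\<in>D. le b wc" using jset_props[OF h(6) h(5) h(4)] wc_def by auto
  have Dwc: "\<forall>x\<in>D. S x [wc]" using wc S1_le h by blast
  have cwc: "S c [wc]" using S1_le wc h by blast
  have awc: "S a [wc]"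
  proof -
    consider "le a c" | d where "d \<in> M" "Sset d D" "le a (j c d)" using pq(1) unfolding A1_def by blast
    then show ?thesis
    proof cases
      case 1 then show ?thesis using M3 h cwc by blast
    next
      case 2
      have "Sset d {wc}" using Sset_cut[OF 2(2), of "{wc}"] Dwc wc by auto
      then have "S d [wc]" using Sset_single by blast
      then have "S (j c d) [wc]" using M7 cwc by blast
      then show ?thesis using M3 h 2 by blast
    qed
  qed
  have "A1 a c {wc}" unfolding A1_def using awc Sset_single h upper2 by blast
  moreover have "S (jset j a B) [wc]"
  proof (rule jset_induct[OF h(3) h(2) h(1), of "\<lambda>x. S x [wc]"])
    show "S a [wc]" by (rule awc)
    show "\<forall>x\<in>B. S x [wc]" using pq(2) Dwc S_trans1 by blast
    show "\<And>x y. x \<in> M \<Longrightarrow> y \<in> M \<Longrightarrow> S x [wc] \<Longrightarrow> S y [wc] \<Longrightarrow> S (j x y) [wc]" using M7 by blast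
  qed
  ultimately show ?thesis unfolding pr_def kk_def using p q wc_def by simp
qed

lemma pr_kk_idem: "p \<in> P \<Longrightarrow> pr (kk (kk p)) (kk p)"
proof -
  assume pP: "p \<in> P"
  obtain a B where p: "p = (a, B)" by fastforce
  have h: "a \<in> M" "B \<subseteq> M" "finite B" using pP p by auto
  define w where "w = jset j a B"
  have w: "w \<in> M" "le a w" using jset_props[OF h(3) h(2) h(1)] w_def by auto
  have "S (jset j a {w}) [w]"
  proof (rule jset_induct[of "{w}" a "\<lambda>x. S x [w]"])
    show "S a [w]" using S1_le w h by blast
  qed (use w h M1 M7 in auto)
  then show ?thesis unfolding pr_def kk_def A1_def using p le_refl h w_def by auto
qed

lemma cls_alt: "p \<in> P \<Longrightarrow> cls M j S p = {q\<in>P. pr q p \<and> pr p q}"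
  unfolding cls_def by (rule Collect_cong) (use prec_eq[of _ p] prec_eq[of p] in blast)

lemma cls_self: "p \<in> P \<Longrightarrow> p \<in> cls M j S p"
proof -
  assume h: "p \<in> P"
  show ?thesis unfolding cls_alt[OF h] using h pr_refl[OF h] by blast
qed

lemma cls_eq: "p \<in> P \<Longrightarrow> q \<in> P \<Longrightarrow> cls M j S p = cls M j S q \<longleftrightarrow> pr p q \<and> pr q p"
proof
  assume h: "p \<in> P" "q \<in> P" "cls M j S p = cls M j S q"
  then have "p \<in> cls M j S q" using cls_self[OF h(1)] by blast
  then show "pr p q \<and> pr q p" using cls_alt[OF h(2)] by blast
next
  assume h: "p \<in> P" "q \<in> P" "pr p q \<and> pr q p"
  show "cls M j S p = cls M j S q"
    unfolding cls_alt[OF h(1)] cls_alt[OF h(2)]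
  proof (rule Collect_cong)
    fix r
    show "(r \<in> P \<and> pr r p \<and> pr p r) = (r \<in> P \<and> pr r q \<and> pr q r)"
      using pr_trans[of r p q] pr_trans[of r q p] pr_trans[of p q r] pr_trans[of q p r] h by blast
  qed
qed

lemma tcar_mem: "X \<in> tcar M j S \<Longrightarrow> q \<in> X \<Longrightarrow> q \<in> P \<and> X = cls M j S q"
proof -
  assume h: "X \<in> tcar M j S" "q \<in> X"
  then obtain p where p: "p \<in> P" "X = cls M j S p" unfolding tcar_def by auto
  then have "q \<in> P" "pr q p" "pr p q" using h cls_alt[OF p(1)] by auto
  then show ?thesis using cls_eq p by auto
qed

lemma tcar_cases: "X \<in> tcar M j S \<Longrightarrow> \<exists>p\<in>P. X = cls M j S p"
  unfolding tcar_def by auto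

lemma cls_in: "p \<in> P \<Longrightarrow> cls M j S p \<in> tcar M j S"
  unfolding tcar_def by auto

lemma tjoin_cls:
  assumes "p \<in> P" "q \<in> P"
  shows "tjoin M j S (cls M j S p) (cls M j S q) = cls M j S (pj p q)"
proof -
  have "cls M j S (j (fst p') (fst q'), snd p' \<union> snd q') = cls M j S (pj p q)"
    if "p' \<in> cls M j S p" "q' \<in> cls M j S q" for p' q'
  proof -
    have h: "p' \<in> P" "q' \<in> P" "pr p' p" "pr p p'" "pr q' q" "pr q q'" using that cls_alt[OF assms(1)] cls_alt[OF assms(2)] by auto
    have "(j (fst p') (fst q'), snd p' \<union> snd q') = pj p' q'" unfolding pj_def by simp
    moreover have "pr (pj p' q') (pj p q)" "pr (pj p q) (pj p' q')"
      using pr_pj_mono h assms by auto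
    ultimately show ?thesis using cls_eq pj_in h assms by auto
  qed
  moreover have "(j (fst p) (fst q), snd p \<union> snd q) = pj p q" unfolding pj_def by simp
  ultimately show ?thesis unfolding tjoin_def using cls_self assms by blast
qed

lemma tK_cls:
  assumes "p \<in> P"
  shows "tK M j S (cls M j S p) = cls M j S (kk p)"
proof -
  have "cls M j S (fst p', {jset j (fst p') (snd p')}) = cls M j S (kk p)"
    if "p' \<in> cls M j S p" for p'
  proof -
    have h: "p' \<in> P" "pr p' p" "pr p p'" using that cls_alt[OF assms] by auto
    have "(fst p', {jset j (fst p') (snd p')}) = kk p'" unfolding kk_def by simp
    moreover have "pr (kk p') (kk p)" "pr (kk p) (kk p')"
      using pr_kk_mono h assms by auto
    ultimately show ?thesis using cls_eq kk_in h assms by auto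
  qed
  moreover have "(fst p, {jset j (fst p) (snd p)}) = kk p" unfolding kk_def by simp
  ultimately show ?thesis unfolding tK_def using cls_self assms by blast
qed

lemma tle_cls:
  assumes "p \<in> P" "q \<in> P"
  shows "sle (tjoin M j S) (cls M j S p) (cls M j S q) \<longleftrightarrow> pr p q"
proof -
  have "sle (tjoin M j S) (cls M j S p) (cls M j S q) \<longleftrightarrow> cls M j S (pj p q) = cls M j S q"
    unfolding sle_def using tjoin_cls assms by simp
  also have "\<dots> \<longleftrightarrow> pr (pj p q) q \<and> pr q (pj p q)" using cls_eq pj_in assms by auto
  also have "\<dots> \<longleftrightarrow> pr p q"
  proof
    assume "pr (pj p q) q \<and> pr q (pj p q)"
    then show "pr p q" using pr_trans[OF assms(1) pj_in[OF assms] assms(2) pr_upper1[OF assms]] by blast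
  next
    assume "pr p q"
    then show "pr (pj p q) q \<and> pr q (pj p q)"
      using pr_lub[OF assms assms(2) _ pr_refl[OF assms(2)]] pr_upper2[OF assms] by blast
  qed
  finally show ?thesis .
qed

lemma tslat: "slat (tcar M j S) (tjoin M j S)"
proof
  fix X Y Z assume X: "X \<in> tcar M j S" and Y: "Y \<in> tcar M j S"
  obtain p where p: "p \<in> P" "X = cls M j S p" using tcar_cases X by blast
  obtain q where q: "q \<in> P" "Y = cls M j S q" using tcar_cases Y by blast
  show "tjoin M j S X Y \<in> tcar M j S" using tjoin_cls p q cls_in pj_in by auto
  have "pj p q = pj q p" unfolding pj_def using comm fstP p q by (simp add: Un_commute)
  then show "tjoin M j S X Y = tjoin M j S Y X" using tjoin_cls p q by metis
  assume Z: "Z \<in> tcar M j S"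
  obtain r where r: "r \<in> P" "Z = cls M j S r" using tcar_cases Z by blast
  have "fst p \<in> M" "fst q \<in> M" "fst r \<in> M" using p q r fstP by auto
  then have "pj (pj p q) r = pj p (pj q r)" unfolding pj_def by (simp add: assoc Un_assoc)
  then show "tjoin M j S (tjoin M j S X Y) Z = tjoin M j S X (tjoin M j S Y Z)"
    using tjoin_cls p q r pj_in by auto
next
  fix X assume X: "X \<in> tcar M j S"
  obtain p where p: "p \<in> P" "X = cls M j S p" using tcar_cases X by blast
  have "fst p \<in> M" using p fstP by auto
  then have "pj p p = p" unfolding pj_def by (simp add: idem)
  then show "tjoin M j S X X = X" using tjoin_cls p by auto
qed

lemma tcar_K:
  assumes "X \<in> tcar M j S"
  obtains p where "p \<in> P" "X = cls M j S p" "tK M j S X = cls M j S (kk p)" "kk p \<in> P"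
  using assms tcar_cases tK_cls kk_in by metis

lemma part1:
  "regular (tcar M j S) (tjoin M j S) (tS M j S) \<and>
   (\<forall>X\<in>tcar M j S. Kop (tcar M j S) (tjoin M j S) (tS M j S) X = tK M j S X)"
proof (rule closure_regular[OF tslat])
  show "\<forall>x\<in>tcar M j S. tK M j S x \<in> tcar M j S"
  proof
    fix X assume "X \<in> tcar M j S"
    then obtain p where "p \<in> P" "X = cls M j S p" "tK M j S X = cls M j S (kk p)" "kk p \<in> P" by (rule tcar_K)
    then show "tK M j S X \<in> tcar M j S" using cls_in by simp
  qed
  show "\<forall>x\<in>tcar M j S. sle (tjoin M j S) x (tK M j S x)"
  proof
    fix X assume "X \<in> tcar M j S"
    then obtain p where "p \<in> P" "X = cls M j S p" "tK M j S X = cls M j S (kk p)" "kk p \<in> P" by (rule tcar_K)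
    then show "sle (tjoin M j S) X (tK M j S X)" using tle_cls pr_kk_ext by simp
  qed
  show "\<forall>x\<in>tcar M j S. \<forall>y\<in>tcar M j S. sle (tjoin M j S) x y \<longrightarrow> sle (tjoin M j S) (tK M j S x) (tK M j S y)"
  proof (intro ballI impI)
    fix X Y assume "X \<in> tcar M j S" "Y \<in> tcar M j S" and le: "sle (tjoin M j S) X Y"
    obtain p where p: "p \<in> P" "X = cls M j S p" "tK M j S X = cls M j S (kk p)" "kk p \<in> P"
      using \<open>X \<in> tcar M j S\<close> by (rule tcar_K)
    obtain q where q: "q \<in> P" "Y = cls M j S q" "tK M j S Y = cls M j S (kk q)" "kk q \<in> P"
      using \<open>Y \<in> tcar M j S\<close> by (rule tcar_K)
    have "pr p q" using le p q tle_cls by simp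
    then have "pr (kk p) (kk q)" using pr_kk_mono p q by blast
    then show "sle (tjoin M j S) (tK M j S X) (tK M j S Y)" using tle_cls p q by simp
  qed
  show "\<forall>x\<in>tcar M j S. sle (tjoin M j S) (tK M j S (tK M j S x)) (tK M j S x)"
  proof
    fix X assume "X \<in> tcar M j S"
    then obtain p where p: "p \<in> P" "X = cls M j S p" "tK M j S X = cls M j S (kk p)" "kk p \<in> P" by (rule tcar_K)
    have "tK M j S (tK M j S X) = cls M j S (kk (kk p))" using p tK_cls by simp
    moreover have "pr (kk (kk p)) (kk p)" using pr_kk_idem p by blast
    ultimately show "sle (tjoin M j S) (tK M j S (tK M j S X)) (tK M j S X)"
      using tle_cls p kk_in by simp
  qed
  show "\<And>a bs. tS M j S a bs = (a \<in> tcar M j S \<and> bs \<noteq> [] \<and> set bs \<subseteq> tcar M j S \<and>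
      sle (tjoin M j S) a (joinl (tjoin M j S) (map (tK M j S) bs)))"
    unfolding tS_def by (rule refl)
qed

end



lemma joinl_Cons': "xs \<noteq> [] \<Longrightarrow> joinl j (x # xs) = j x (joinl j xs)"
  by (cases xs) auto

lemma joinl_hom:
  assumes sl: "slat A jA" and h: "\<forall>x\<in>A. \<forall>y\<in>A. f (jA x y) = jB (f x) (f y)"
    and "xs \<noteq> []" "set xs \<subseteq> A"
  shows "f (joinl jA xs) = joinl jB (map f xs)"
  using assms(3,4)
proof (induction xs rule: list_nonempty_induct)
  case (single x) then show ?case by simp
next
  case (cons x xs)
  have in1: "joinl jA xs \<in> A" using slat.joinl_in[OF sl cons.hyps(1)] cons.prems by simp
  have "f (joinl jA (x # xs)) = f (jA x (joinl jA xs))" using joinl_Cons'[OF cons.hyps(1)] by simp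
  also have "\<dots> = jB (f x) (f (joinl jA xs))" using h in1 cons.prems by simp
  also have "\<dots> = jB (f x) (joinl jB (map f xs))" using cons by simp
  also have "\<dots> = joinl jB (map f (x # xs))" using joinl_Cons'[of "map f xs" jB "f x"] cons.hyps(1) by simp
  finally show ?case .
qed

context mss
begin

lemma ups_cls: "ups M j S a = cls M j S (a, {})"
  unfolding ups_def by simp

lemma tK_ups: "a \<in> M \<Longrightarrow> tK M j S (ups M j S a) = cls M j S (a, {a})"
  unfolding ups_cls using tK_cls[of "(a, {})"] unfolding kk_def by (simp add: jset_empty)

lemma joinl_tK_ups:
  assumes "bs \<noteq> []" "set bs \<subseteq> M"
  shows "joinl (tjoin M j S) (map (tK M j S) (map (ups M j S) bs)) = cls M j S (joinl j bs, set bs)"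
  using assms
proof (induction bs rule: list_nonempty_induct)
  case (single x) then show ?case using tK_ups by simp
next
  case (cons x xs)
  have ne: "map (tK M j S) (map (ups M j S) xs) \<noteq> []" using cons.hyps by simp
  have xM: "x \<in> M" and xsM: "set xs \<subseteq> M" using cons.prems by auto
  have jin: "joinl j xs \<in> M" using joinl_in[OF cons.hyps(1) xsM] .
  have "joinl (tjoin M j S) (map (tK M j S) (map (ups M j S) (x # xs)))
      = tjoin M j S (cls M j S (x, {x})) (cls M j S (joinl j xs, set xs))"
    using joinl_Cons'[OF ne] tK_ups[OF xM] cons.IH[OF xsM] by simp
  also have "\<dots> = cls M j S (pj (x, {x}) (joinl j xs, set xs))"
    using tjoin_cls xM jin xsM by simp
  also have "\<dots> = cls M j S (joinl j (x # xs), set (x # xs))"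
    unfolding pj_def using joinl_Cons'[OF cons.hyps(1)] by simp
  finally show ?case .
qed

lemma ups_in: "a \<in> M \<Longrightarrow> ups M j S a \<in> tcar M j S"
  unfolding ups_cls using cls_in by simp

lemma ups_mhom: "mhom M j S (tcar M j S) (tjoin M j S) (tS M j S) (ups M j S)"
  unfolding mhom_def
proof (intro conjI ballI allI impI)
  show "ups M j S a \<in> tcar M j S" if "a \<in> M" for a using ups_in that .
  show "ups M j S (j a b) = tjoin M j S (ups M j S a) (ups M j S b)" if "a \<in> M" "b \<in> M" for a b
    unfolding ups_cls using tjoin_cls[of "(a, {})" "(b, {})"] that unfolding pj_def by simp
  show "tS M j S (ups M j S a) (map (ups M j S) bs)" if "S a bs" for a bs
  proof -
    have h: "a \<in> M" "bs \<noteq> []" "set bs \<subseteq> M" using S_dom[OF that] by auto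
    have jin: "joinl j bs \<in> M" using joinl_in h by blast
    have "Sset a (set bs)" unfolding Sset_def using that by blast
    moreover have "le a (j (joinl j bs) a)" using upper2 h jin by blast
    ultimately have "pr (a, {}) (joinl j bs, set bs)" unfolding pr_def A1_def using h by auto
    then have "sle (tjoin M j S) (ups M j S a) (joinl (tjoin M j S) (map (tK M j S) (map (ups M j S) bs)))"
      unfolding joinl_tK_ups[OF h(2,3)] ups_cls using tle_cls h jin by simp
    moreover have "set (map (ups M j S) bs) \<subseteq> tcar M j S" using ups_in h by auto
    ultimately show ?thesis unfolding tS_def using ups_in h by simp
  qed
qed

lemma part2: "membedding M j S (tcar M j S) (tjoin M j S) (tS M j S) (ups M j S)"
  unfolding membedding_def
proof (intro conjI)
  show "mhom M j S (tcar M j S) (tjoin M j S) (tS M j S) (ups M j S)" by (rule ups_mhom)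
  show "inj_on (ups M j S) M"
  proof (rule inj_onI)
    fix a b assume h: "a \<in> M" "b \<in> M" "ups M j S a = ups M j S b"
    then have "pr (a, {}) (b, {}) \<and> pr (b, {}) (a, {})" using cls_eq[of "(a, {})" "(b, {})"] unfolding ups_cls by simp
    then have "le a b" "le b a" unfolding pr_def A1_def using Sset_empty by auto
    then show "a = b" using le_antisym h by blast
  qed
  show "\<forall>a\<in>M. \<forall>bs. bs \<noteq> [] \<and> set bs \<subseteq> M \<and> tS M j S (ups M j S a) (map (ups M j S) bs) \<longrightarrow> S a bs"
  proof (intro ballI allI impI)
    fix a bs assume a: "a \<in> M" and h: "bs \<noteq> [] \<and> set bs \<subseteq> M \<and> tS M j S (ups M j S a) (map (ups M j S) bs)"
    have jin: "joinl j bs \<in> M" using joinl_in h by blast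
    have "sle (tjoin M j S) (ups M j S a) (joinl (tjoin M j S) (map (tK M j S) (map (ups M j S) bs)))"
      using h unfolding tS_def by simp
    moreover have eq: "joinl (tjoin M j S) (map (tK M j S) (map (ups M j S) bs)) = cls M j S (joinl j bs, set bs)"
      using joinl_tK_ups h by blast
    ultimately have "sle (tjoin M j S) (cls M j S (a, {})) (cls M j S (joinl j bs, set bs))"
      unfolding ups_cls by simp
    then have "pr (a, {}) (joinl j bs, set bs)"
      using tle_cls[of "(a, {})" "(joinl j bs, set bs)"] h jin a by simp
    then have A: "A1 a (joinl j bs) (set bs)" unfolding pr_def by simp
    have Sj: "S (joinl j bs) bs"
      using joinl_induct[of bs "\<lambda>x. S x bs"] h S_elem M7 by blast
    consider "le a (joinl j bs)" | d where "d \<in> M" "Sset d (set bs)" "le a (j (joinl j bs) d)"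
      using A unfolding A1_def by blast
    then show "S a bs"
    proof cases
      case 1 then show ?thesis using M3 a Sj by blast
    next
      case 2
      have "S d bs" using Sset_list[OF 2(2)] by simp
      then have "S (j (joinl j bs) d) bs" using M7 Sj by blast
      then show ?thesis using M3 a 2 by blast
    qed
  qed
qed

end



lemma jset_empty': "jset f a {} = a"
  unfolding jset_def by simp

locale uni = mss M j S for M :: "'a set" and j S +
  fixes T :: "'b set" and jT ST and \<eta> :: "'a \<Rightarrow> 'b"
  assumes rg: "regular T jT ST" and hm: "mhom M j S T jT ST \<eta>"
begin

abbreviation "KT \<equiv> Kop T jT ST"
abbreviation "leT \<equiv> sle jT"

lemma RP: "slat T jT \<and> (\<forall>x\<in>T. KT x \<in> T) \<and> (\<forall>x\<in>T. leT x (KT x))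
    \<and> (\<forall>x\<in>T. \<forall>y\<in>T. leT x y \<longrightarrow> leT (KT x) (KT y))
    \<and> (\<forall>x\<in>T. leT (KT (KT x)) (KT x))
    \<and> (\<forall>x\<in>T. \<forall>y\<in>T. leT x (KT y) \<longrightarrow> leT (KT x) (KT y))
    \<and> (\<forall>a bs. ST a bs \<longleftrightarrow> (a\<in>T \<and> bs\<noteq>[] \<and> set bs \<subseteq> T \<and> leT a (joinl jT (map KT bs))))"
  by (rule regular_props[OF rg])

sublocale TT: slat T jT by (rule RP[THEN conjunct1])

lemma KT_in: "x \<in> T \<Longrightarrow> KT x \<in> T" using RP[THEN conjunct2, THEN conjunct1] by (rule bspec)
lemma KT_ext: "x \<in> T \<Longrightarrow> leT x (KT x)" using RP[THEN conjunct2, THEN conjunct2, THEN conjunct1] by (rule bspec)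
lemma KT_mono: "x \<in> T \<Longrightarrow> y \<in> T \<Longrightarrow> leT x y \<Longrightarrow> leT (KT x) (KT y)"
  using RP[THEN conjunct2, THEN conjunct2, THEN conjunct2, THEN conjunct1] by blast
lemma KT_c: "x \<in> T \<Longrightarrow> y \<in> T \<Longrightarrow> leT x (KT y) \<Longrightarrow> leT (KT x) (KT y)"
  using RP[THEN conjunct2, THEN conjunct2, THEN conjunct2, THEN conjunct2, THEN conjunct2, THEN conjunct1] by blast
lemma ST_iff: "ST a bs \<longleftrightarrow> (a\<in>T \<and> bs\<noteq>[] \<and> set bs \<subseteq> T \<and> leT a (joinl jT (map KT bs)))"
  using RP[THEN conjunct2, THEN conjunct2, THEN conjunct2, THEN conjunct2, THEN conjunct2, THEN conjunct2] by (rule spec2)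

lemma eta_in: "a \<in> M \<Longrightarrow> \<eta> a \<in> T" using hm unfolding mhom_def by blast
lemma eta_join: "a \<in> M \<Longrightarrow> b \<in> M \<Longrightarrow> \<eta> (j a b) = jT (\<eta> a) (\<eta> b)" using hm unfolding mhom_def by blast
lemma eta_S: "S a bs \<Longrightarrow> ST (\<eta> a) (map \<eta> bs)" using hm unfolding mhom_def by blast
lemma eta_mono: "a \<in> M \<Longrightarrow> b \<in> M \<Longrightarrow> le a b \<Longrightarrow> leT (\<eta> a) (\<eta> b)"
  unfolding sle_def by (metis eta_join)

definition F where "F p = jset jT (\<eta> (fst p)) ((\<lambda>b. KT (\<eta> b)) ` snd p)"

lemma F_props:
  assumes "p \<in> P"
  shows "F p \<in> T \<and> leT (\<eta> (fst p)) (F p) \<and> (\<forall>b\<in>snd p. leT (KT (\<eta> b)) (F p))"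
proof -
  have h: "fst p \<in> M" "snd p \<subseteq> M" "finite (snd p)" using fstP assms by auto
  have "finite ((\<lambda>b. KT (\<eta> b)) ` snd p)" "(\<lambda>b. KT (\<eta> b)) ` snd p \<subseteq> T" "\<eta> (fst p) \<in> T"
    using h eta_in KT_in by auto
  then show ?thesis using TT.jset_props unfolding F_def by blast
qed

lemma F_lub:
  assumes "p \<in> P" "z \<in> T" "leT (\<eta> (fst p)) z" "\<forall>b\<in>snd p. leT (KT (\<eta> b)) z"
  shows "leT (F p) z"
proof -
  have h: "fst p \<in> M" "snd p \<subseteq> M" "finite (snd p)" using fstP assms by auto
  have "finite ((\<lambda>b. KT (\<eta> b)) ` snd p)" "(\<lambda>b. KT (\<eta> b)) ` snd p \<subseteq> T" "\<eta> (fst p) \<in> T"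
    using h eta_in KT_in by auto
  then show ?thesis unfolding F_def using TT.jset_lub assms by blast
qed

lemma F_mono:
  assumes "p \<in> P" "q \<in> P" "pr p q"
  shows "leT (F p) (F q)"
proof -
  obtain a B where p: "p = (a, B)" by fastforce
  obtain c D where q: "q = (c, D)" by fastforce
  have h: "a \<in> M" "B \<subseteq> M" "finite B" "c \<in> M" "D \<subseteq> M" "finite D" using assms p q by auto
  have pq: "A1 a c D" "\<forall>b\<in>B. \<exists>d\<in>D. S b [d]" using assms(3) p q unfolding pr_def by auto
  have Fq: "F q \<in> T" "leT (\<eta> c) (F q)" "\<forall>b\<in>D. leT (KT (\<eta> b)) (F q)" using F_props[OF assms(2)] q by auto
  have etaa: "leT (\<eta> a) (F q)"
  proof -
    consider "le a c" | d where "d \<in> M" "Sset d D" "le a (j c d)" using pq(1) unfolding A1_def by blast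
    then show ?thesis
    proof cases
      case 1
      show ?thesis using TT.le_trans[OF eta_in[OF h(1)] eta_in[OF h(4)] Fq(1) eta_mono[OF h(1) h(4) 1] Fq(2)] .
    next
      case 2
      obtain ds where ds: "set ds = D" using h(6) finite_list by blast
      have "S d ds" using Sset_list[OF 2(2) ds] .
      then have "ST (\<eta> d) (map \<eta> ds)" by (rule eta_S)
      then have d1: "leT (\<eta> d) (joinl jT (map KT (map \<eta> ds)))" and ne: "ds \<noteq> []"
        unfolding ST_iff[of "\<eta> d" "map \<eta> ds"] by simp_all
      have sub: "set (map KT (map \<eta> ds)) \<subseteq> T" using ds h eta_in KT_in by auto
      have ne2: "map KT (map \<eta> ds) \<noteq> []" using ne by simp
      have "\<forall>x\<in>set (map KT (map \<eta> ds)). leT x (F q)" using Fq(3) ds by auto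
      then have "leT (joinl jT (map KT (map \<eta> ds))) (F q)"
        using TT.joinl_lub[OF ne2 sub Fq(1)] by blast
      then have "leT (\<eta> d) (F q)"
        by (rule TT.le_trans[OF eta_in[OF 2(1)] TT.joinl_in[OF ne2 sub] Fq(1) d1])
      then have "leT (jT (\<eta> c) (\<eta> d)) (F q)" by (rule TT.lub[OF eta_in[OF h(4)] eta_in[OF 2(1)] Fq(1) Fq(2)])
      moreover have "\<eta> (j c d) = jT (\<eta> c) (\<eta> d)" by (rule eta_join[OF h(4) 2(1)])
      ultimately have Y: "leT (\<eta> (j c d)) (F q)" by (simp only:)
      have cdM: "j c d \<in> M" by (rule closed[OF h(4) 2(1)])
      have X: "leT (\<eta> a) (\<eta> (j c d))" by (rule eta_mono[OF h(1) cdM 2(3)])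
      show ?thesis by (rule TT.le_trans[OF eta_in[OF h(1)] eta_in[OF cdM] Fq(1) X Y])
    qed
  qed
  have "leT (KT (\<eta> b)) (F q)" if "b \<in> B" for b
  proof -
    have "\<exists>d\<in>D. S b [d]" using pq(2) that by (rule bspec)
    then obtain d where d: "d \<in> D" "S b [d]" by (elim bexE)
    have bM: "b \<in> M" using that h(2) by (rule subsetD[rotated])
    have dM: "d \<in> M" using d(1) h(5) by (rule subsetD[rotated])
    have "ST (\<eta> b) (map \<eta> [d])" by (rule eta_S[OF d(2)])
    then have "ST (\<eta> b) [\<eta> d]" by simp
    then have "leT (\<eta> b) (KT (\<eta> d))" unfolding ST_iff[of "\<eta> b" "[\<eta> d]"] by simp
    then have Z: "leT (KT (\<eta> b)) (KT (\<eta> d))" by (rule KT_c[OF eta_in[OF bM] eta_in[OF dM]])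
    have W: "leT (KT (\<eta> d)) (F q)" using Fq(3) d(1) by blast
    show ?thesis by (rule TT.le_trans[OF KT_in[OF eta_in[OF bM]] KT_in[OF eta_in[OF dM]] Fq(1) Z W])
  qed
  then have e2: "\<forall>b\<in>snd p. leT (KT (\<eta> b)) (F q)" using p by simp
  have e1: "leT (\<eta> (fst p)) (F q)" using etaa p by simp
  show ?thesis by (rule F_lub[OF assms(1) Fq(1) e1 e2])
qed

definition e where "e X = F (SOME p. p \<in> X)"

lemma e_cls: "p \<in> P \<Longrightarrow> e (cls M j S p) = F p"
proof -
  assume pP: "p \<in> P"
  have "\<exists>p'. p' \<in> cls M j S p" using cls_self[OF pP] by blast
  then have s: "(SOME p'. p' \<in> cls M j S p) \<in> cls M j S p" by (rule someI_ex)
  define p' where "p' = (SOME p'. p' \<in> cls M j S p)"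
  have h: "p' \<in> P" "pr p' p" "pr p p'" using s cls_alt[OF pP] p'_def by auto
  have "F p' = F p" using F_mono[OF h(1) pP h(2)] F_mono[OF pP h(1) h(3)] F_props h pP TT.le_antisym by blast
  then show ?thesis unfolding e_def p'_def[symmetric] .
qed

lemma F_pj: "p \<in> P \<Longrightarrow> q \<in> P \<Longrightarrow> F (pj p q) = jT (F p) (F q)"
proof -
  assume pP: "p \<in> P" and qP: "q \<in> P"
  have Fp: "F p \<in> T" "leT (\<eta> (fst p)) (F p)" "\<forall>b\<in>snd p. leT (KT (\<eta> b)) (F p)" using F_props[OF pP] by auto
  have Fq: "F q \<in> T" "leT (\<eta> (fst q)) (F q)" "\<forall>b\<in>snd q. leT (KT (\<eta> b)) (F q)" using F_props[OF qP] by auto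
  have pjP: "pj p q \<in> P" using pj_in pP qP by blast
  have FpqT: "jT (F p) (F q) \<in> T" using TT.closed Fp Fq by blast
  have hp: "fst p \<in> M" "snd p \<subseteq> M" and hq: "fst q \<in> M" "snd q \<subseteq> M" using fstP pP qP by auto
  have u1: "leT (F p) (jT (F p) (F q))" using TT.upper1 Fp Fq by blast
  have u2: "leT (F q) (jT (F p) (F q))" using TT.upper2 Fp Fq by blast
  have "leT (F (pj p q)) (jT (F p) (F q))"
  proof (rule F_lub[OF pjP FpqT])
    have "\<eta> (fst (pj p q)) = jT (\<eta> (fst p)) (\<eta> (fst q))" unfolding pj_def using eta_join hp hq by simp
    then show "leT (\<eta> (fst (pj p q))) (jT (F p) (F q))"
      using TT.join_mono[OF eta_in[OF hp(1)] eta_in[OF hq(1)] Fp(1) Fq(1) Fp(2) Fq(2)] by simp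
    show "\<forall>b\<in>snd (pj p q). leT (KT (\<eta> b)) (jT (F p) (F q))"
    proof
      fix b assume "b \<in> snd (pj p q)"
      then have "b \<in> snd p \<or> b \<in> snd q" unfolding pj_def by simp
      then show "leT (KT (\<eta> b)) (jT (F p) (F q))"
      proof
        assume b: "b \<in> snd p"
        then have "b \<in> M" using hp by auto
        then show ?thesis using TT.le_trans[OF KT_in[OF eta_in] Fp(1) FpqT _ u1] Fp(3) b by blast
      next
        assume b: "b \<in> snd q"
        then have "b \<in> M" using hq by auto
        then show ?thesis using TT.le_trans[OF KT_in[OF eta_in] Fq(1) FpqT _ u2] Fq(3) b by blast
      qed
    qed
  qed
  moreover have "leT (jT (F p) (F q)) (F (pj p q))"
    using TT.lub[OF Fp(1) Fq(1)] F_mono[OF pP pjP pr_upper1[OF pP qP]] F_mono[OF qP pjP pr_upper2[OF pP qP]]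
      F_props[OF pjP] by blast
  ultimately show ?thesis using TT.le_antisym F_props[OF pjP] FpqT by blast
qed

lemma F_kk: "p \<in> P \<Longrightarrow> F (kk p) = KT (F p)"
proof -
  assume pP: "p \<in> P"
  obtain a B where p: "p = (a, B)" by fastforce
  have h: "a \<in> M" "B \<subseteq> M" "finite B" using pP p by auto
  define w where "w = jset j a B"
  have w: "w \<in> M" "le a w" "\<forall>b\<in>B. le b w" using jset_props[OF h(3) h(2) h(1)] w_def by auto
  have kP: "kk p \<in> P" using kk_in pP by blast
  have kp: "kk p = (a, {w})" unfolding kk_def p w_def by simp
  have Fp: "F p \<in> T" "leT (\<eta> a) (F p)" "\<forall>b\<in>B. leT (KT (\<eta> b)) (F p)" using F_props[OF pP] p by auto
  have Fk: "F (kk p) \<in> T" "leT (\<eta> a) (F (kk p))" "leT (KT (\<eta> w)) (F (kk p))" using F_props[OF kP] kp by auto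
  have etaw: "\<eta> w \<in> T" using eta_in w by blast
  have KFp: "KT (F p) \<in> T" using KT_in Fp by blast
  have ew: "leT (\<eta> w) (F p)"
  proof -
    have "w \<in> M \<and> leT (\<eta> w) (F p)" unfolding w_def
    proof (rule jset_induct[OF h(3) h(2) h(1), of "\<lambda>x. x \<in> M \<and> leT (\<eta> x) (F p)"])
      show "a \<in> M \<and> leT (\<eta> a) (F p)" using h Fp by blast
      show "\<forall>x\<in>B. x \<in> M \<and> leT (\<eta> x) (F p)"
      proof
        fix x assume x: "x \<in> B"
        then have xM: "x \<in> M" using h by auto
        have "leT (\<eta> x) (KT (\<eta> x))" using KT_ext eta_in xM by blast
        then show "x \<in> M \<and> leT (\<eta> x) (F p)" using TT.le_trans[OF eta_in[OF xM] KT_in[OF eta_in[OF xM]] Fp(1)] Fp(3) x xM by blast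
      qed
      show "\<And>x y. x \<in> M \<Longrightarrow> y \<in> M \<Longrightarrow> x \<in> M \<and> leT (\<eta> x) (F p) \<Longrightarrow> y \<in> M \<and> leT (\<eta> y) (F p) \<Longrightarrow>
          j x y \<in> M \<and> leT (\<eta> (j x y)) (F p)"
        using closed eta_join TT.lub eta_in Fp(1) by simp
    qed
    then show ?thesis by blast
  qed
  have "leT (F (kk p)) (KT (F p))"
  proof (rule F_lub[OF kP KFp])
    show "leT (\<eta> (fst (kk p))) (KT (F p))" using kp TT.le_trans[OF eta_in[OF h(1)] Fp(1) KFp Fp(2) KT_ext[OF Fp(1)]] by simp
    have "leT (KT (\<eta> w)) (KT (F p))" using KT_mono[OF etaw Fp(1) ew] .
    then show "\<forall>b\<in>snd (kk p). leT (KT (\<eta> b)) (KT (F p))" using kp by simp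
  qed
  moreover have "leT (KT (F p)) (F (kk p))"
  proof -
    have "leT (F p) (KT (\<eta> w))"
    proof (rule F_lub[OF pP KT_in[OF etaw]])
      show "leT (\<eta> (fst p)) (KT (\<eta> w))"
        using p TT.le_trans[OF eta_in[OF h(1)] etaw KT_in[OF etaw] eta_mono[OF h(1) w(1) w(2)] KT_ext[OF etaw]] by simp
      show "\<forall>b\<in>snd p. leT (KT (\<eta> b)) (KT (\<eta> w))"
      proof
        fix b assume "b \<in> snd p"
        then have b: "b \<in> B" "b \<in> M" using p h by auto
        show "leT (KT (\<eta> b)) (KT (\<eta> w))" using KT_mono[OF eta_in[OF b(2)] etaw eta_mono[OF b(2) w(1)]] w(3) b(1) by blast
      qed
    qed
    then have "leT (KT (F p)) (KT (\<eta> w))" using KT_c[OF Fp(1) etaw] by blast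
    then show ?thesis using TT.le_trans[OF KFp KT_in[OF etaw] Fk(1) _ Fk(3)] by blast
  qed
  ultimately show ?thesis using TT.le_antisym Fk(1) KFp by blast
qed

lemma e_tK: "X \<in> tcar M j S \<Longrightarrow> e (tK M j S X) = KT (e X)"
proof -
  assume "X \<in> tcar M j S"
  then obtain p where p: "p \<in> P" "X = cls M j S p" "tK M j S X = cls M j S (kk p)" "kk p \<in> P" by (rule tcar_K)
  then show ?thesis using e_cls F_kk by simp
qed

lemma e_in: "X \<in> tcar M j S \<Longrightarrow> e X \<in> T"
proof -
  assume "X \<in> tcar M j S"
  then obtain p where p: "p \<in> P" "X = cls M j S p" using tcar_cases by blast
  then have "e X = F p" using e_cls by blast
  then show ?thesis using F_props[OF p(1)] by simp
qed

lemma e_join: "X \<in> tcar M j S \<Longrightarrow> Y \<in> tcar M j S \<Longrightarrow> e (tjoin M j S X Y) = jT (e X) (e Y)"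
proof -
  assume X: "X \<in> tcar M j S" and Y: "Y \<in> tcar M j S"
  obtain p where p: "p \<in> P" "X = cls M j S p" using tcar_cases X by blast
  obtain q where q: "q \<in> P" "Y = cls M j S q" using tcar_cases Y by blast
  have "tjoin M j S X Y = cls M j S (pj p q)" using tjoin_cls[OF p(1) q(1)] p q by simp
  then have "e (tjoin M j S X Y) = F (pj p q)" using e_cls[OF pj_in[OF p(1) q(1)]] by simp
  also have "\<dots> = jT (F p) (F q)" using F_pj[OF p(1) q(1)] .
  also have "\<dots> = jT (e X) (e Y)" using e_cls p q by simp
  finally show ?thesis .
qed

lemma e_Khom: "Khom (tcar M j S) (tjoin M j S) (tS M j S) T jT ST e"
  unfolding Khom_def mhom_def
proof (intro conjI ballI allI impI)
  show "e X \<in> T" if "X \<in> tcar M j S" for X using e_in that .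
  show "e (tjoin M j S X Y) = jT (e X) (e Y)" if "X \<in> tcar M j S" "Y \<in> tcar M j S" for X Y using e_join that .
  show "e (Kop (tcar M j S) (tjoin M j S) (tS M j S) X) = KT (e X)" if "X \<in> tcar M j S" for X
    using part1 e_tK that by simp
  show "ST (e X) (map e Ys)" if "tS M j S X Ys" for X Ys
  proof -
    have h: "X \<in> tcar M j S" "Ys \<noteq> []" "set Ys \<subseteq> tcar M j S"
      "sle (tjoin M j S) X (joinl (tjoin M j S) (map (tK M j S) Ys))" using that unfolding tS_def by auto
    have tKin: "set (map (tK M j S) Ys) \<subseteq> tcar M j S" using h(3) part1 regular_props by (smt (verit) imageE set_map subset_iff)
    have J: "joinl (tjoin M j S) (map (tK M j S) Ys) \<in> tcar M j S"
      using slat.joinl_in[OF tslat, of "map (tK M j S) Ys"] h tKin by simp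
    have "e (joinl (tjoin M j S) (map (tK M j S) Ys)) = jT (e X) (e (joinl (tjoin M j S) (map (tK M j S) Ys)))"
      using e_join[OF h(1) J] h(4) unfolding sle_def by simp
    then have le1: "leT (e X) (e (joinl (tjoin M j S) (map (tK M j S) Ys)))" unfolding sle_def by simp
    have "e (joinl (tjoin M j S) (map (tK M j S) Ys)) = joinl jT (map e (map (tK M j S) Ys))"
      using joinl_hom[OF tslat, of e jT] e_join h tKin by simp
    also have "map e (map (tK M j S) Ys) = map KT (map e Ys)" using e_tK h(3) by auto
    finally have "leT (e X) (joinl jT (map KT (map e Ys)))" using le1 by simp
    moreover have "set (map e Ys) \<subseteq> T" using e_in h(3) by auto
    ultimately show ?thesis using ST_iff e_in h by simp
  qed
qed

lemma e_ups: "a \<in> M \<Longrightarrow> e (ups M j S a) = \<eta> a"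
  unfolding ups_cls using e_cls[of "(a, {})"] unfolding F_def by (simp add: jset_empty')

lemma F_insert:
  assumes "a \<in> M" "B \<subseteq> M" "finite B" "b \<in> M"
  shows "F (a, insert b B) = jT (F (a, B)) (KT (\<eta> b))"
proof -
  have p1: "(a, insert b B) \<in> P" and p0: "(a, B) \<in> P" using assms by auto
  have F1: "F (a, insert b B) \<in> T" "leT (\<eta> a) (F (a, insert b B))" "\<forall>x\<in>insert b B. leT (KT (\<eta> x)) (F (a, insert b B))"
    using F_props[OF p1] by auto
  have F0: "F (a, B) \<in> T" "leT (\<eta> a) (F (a, B))" "\<forall>x\<in>B. leT (KT (\<eta> x)) (F (a, B))"
    using F_props[OF p0] by auto
  have Kb: "KT (\<eta> b) \<in> T" using KT_in eta_in assms by blast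
  have R: "jT (F (a, B)) (KT (\<eta> b)) \<in> T" using TT.closed F0 Kb by blast
  have u1: "leT (F (a, B)) (jT (F (a, B)) (KT (\<eta> b)))" using TT.upper1 F0 Kb by blast
  have u2: "leT (KT (\<eta> b)) (jT (F (a, B)) (KT (\<eta> b)))" using TT.upper2 F0 Kb by blast
  have "leT (F (a, insert b B)) (jT (F (a, B)) (KT (\<eta> b)))"
  proof (rule F_lub[OF p1 R])
    show "leT (\<eta> (fst (a, insert b B))) (jT (F (a, B)) (KT (\<eta> b)))"
      using TT.le_trans[OF eta_in[OF assms(1)] F0(1) R F0(2) u1] by simp
    show "\<forall>x\<in>snd (a, insert b B). leT (KT (\<eta> x)) (jT (F (a, B)) (KT (\<eta> b)))"
    proof
      fix x assume "x \<in> snd (a, insert b B)"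
      then have "x = b \<or> x \<in> B" by simp
      then show "leT (KT (\<eta> x)) (jT (F (a, B)) (KT (\<eta> b)))"
      proof
        assume "x = b" then show ?thesis using u2 by simp
      next
        assume x: "x \<in> B"
        then have "x \<in> M" using assms by auto
        then show ?thesis using TT.le_trans[OF KT_in[OF eta_in] F0(1) R _ u1] F0(3) x by blast
      qed
    qed
  qed
  moreover have "leT (F (a, B)) (F (a, insert b B))"
  proof (rule F_mono[OF p0 p1])
    have "\<forall>x\<in>B. \<exists>d\<in>insert b B. S x [d]" using M1 assms by blast
    then show "pr (a, B) (a, insert b B)" unfolding pr_def A1_def using le_refl assms by simp
  qed
  ultimately show ?thesis
    using TT.le_antisym[OF _ R] TT.lub[OF F0(1) Kb F1(1)] F1 R by blast
qed

lemma e_unique: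
  assumes kh: "Khom (tcar M j S) (tjoin M j S) (tS M j S) T jT ST e'"
    and eu: "\<forall>a\<in>M. e' (ups M j S a) = \<eta> a"
  shows "\<forall>X\<in>tcar M j S. e' X = e X"
proof
  fix X assume X: "X \<in> tcar M j S"
  have ej: "e' (tjoin M j S X Y) = jT (e' X) (e' Y)" if "X \<in> tcar M j S" "Y \<in> tcar M j S" for X Y
    using kh that unfolding Khom_def mhom_def by blast
  have eK: "e' (tK M j S X) = KT (e' X)" if "X \<in> tcar M j S" for X
    using kh that part1 unfolding Khom_def by metis
  have main: "B \<subseteq> M \<Longrightarrow> e' (cls M j S (a, B)) = F (a, B)" if "finite B" "a \<in> M" for a B
    using that(1)
  proof (induction B rule: finite_induct)
    case empty
    then show ?case using eu that(2) ups_cls unfolding F_def by (simp add: jset_empty')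
  next
    case (insert b B)
    have bM: "b \<in> M" and BM: "B \<subseteq> M" using insert.prems by auto
    have cls_eq': "cls M j S (a, insert b B) = tjoin M j S (cls M j S (a, B)) (tK M j S (ups M j S b))"
    proof -
      have "tjoin M j S (cls M j S (a, B)) (tK M j S (ups M j S b)) = cls M j S (pj (a, B) (b, {b}))"
        using tK_ups[OF bM] tjoin_cls[of "(a, B)" "(b, {b})"] that insert bM BM by simp
      also have "\<dots> = cls M j S (j a b, insert b B)" unfolding pj_def by simp
      also have "\<dots> = cls M j S (a, insert b B)"
      proof -
        have fin: "finite (insert b B)" "insert b B \<subseteq> M" using insert bM BM by auto
        have A2: "\<forall>x\<in>insert b B. \<exists>d\<in>insert b B. S x [d]" using M1 fin by blast
        have "Sset b (insert b B)" using Sset_elem fin by blast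
        moreover have "le (j a b) (j a b)" using le_refl closed that bM by blast
        ultimately have "pr (j a b, insert b B) (a, insert b B)" unfolding pr_def A1_def using A2 bM by auto
        moreover have "pr (a, insert b B) (j a b, insert b B)" unfolding pr_def A1_def using A2 upper1 that bM by auto
        ultimately show ?thesis using cls_eq fin that closed bM by simp
      qed
      finally show ?thesis by simp
    qed
    have in1: "cls M j S (a, B) \<in> tcar M j S" using cls_in that insert BM by simp
    have in2: "ups M j S b \<in> tcar M j S" using ups_in bM .
    have in3: "tK M j S (ups M j S b) \<in> tcar M j S" using tK_ups[OF bM] cls_in bM by simp
    have "e' (cls M j S (a, insert b B)) = jT (e' (cls M j S (a, B))) (e' (tK M j S (ups M j S b)))"
      using cls_eq' ej[OF in1 in3] by simp
    also have "\<dots> = jT (F (a, B)) (KT (\<eta> b))" using insert.IH BM eK[OF in2] eu bM by simp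
    also have "\<dots> = F (a, insert b B)" using F_insert that insert.hyps BM bM by simp
    finally show ?case .
  qed
  obtain p where p: "p \<in> P" "X = cls M j S p" using tcar_cases X by blast
  obtain a B where ab: "p = (a, B)" by fastforce
  have "a \<in> M" "B \<subseteq> M" "finite B" using p ab by auto
  then show "e' X = e X" using main p ab e_cls by simp
qed

end

lemma (in mss) part3:
  "\<forall>(T :: 'b set) jT ST \<eta>. regular T jT ST \<and> mhom M j S T jT ST \<eta> \<longrightarrow>
        (\<exists>e. Khom (tcar M j S) (tjoin M j S) (tS M j S) T jT ST e
             \<and> (\<forall>a\<in>M. e (ups M j S a) = \<eta> a)
             \<and> (\<forall>e'. Khom (tcar M j S) (tjoin M j S) (tS M j S) T jT ST e'
                     \<and> (\<forall>a\<in>M. e' (ups M j S a) = \<eta> a)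
                     \<longrightarrow> (\<forall>X\<in>tcar M j S. e' X = e X)))"
proof (intro allI impI)
  fix T :: "'b set" and jT ST \<eta>
  assume h: "regular T jT ST \<and> mhom M j S T jT ST \<eta>"
  interpret U: uni M j S T jT ST \<eta> using h by unfold_locales blast+
  show "\<exists>e. Khom (tcar M j S) (tjoin M j S) (tS M j S) T jT ST e
             \<and> (\<forall>a\<in>M. e (ups M j S a) = \<eta> a)
             \<and> (\<forall>e'. Khom (tcar M j S) (tjoin M j S) (tS M j S) T jT ST e'
                     \<and> (\<forall>a\<in>M. e' (ups M j S a) = \<eta> a)
                     \<longrightarrow> (\<forall>X\<in>tcar M j S. e' X = e X))"
    using U.e_Khom U.e_ups U.e_unique by blast
qed



lemma mhom_comp:
  assumes f: "mhom A jA SA B jB SB f" and g: "mhom B jB SB C jC SC g"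
  shows "mhom A jA SA C jC SC (\<lambda>a. g (f a))"
  unfolding mhom_def
proof (intro conjI ballI allI impI)
  show "g (f a) \<in> C" if "a \<in> A" for a using f g that unfolding mhom_def by blast
  show "g (f (jA a b)) = jC (g (f a)) (g (f b))" if "a \<in> A" "b \<in> A" for a b
  proof -
    have "f (jA a b) = jB (f a) (f b)" "f a \<in> B" "f b \<in> B" using f that unfolding mhom_def by blast+
    then show ?thesis using g unfolding mhom_def by simp
  qed
  show "SC (g (f a)) (map (\<lambda>a. g (f a)) bs)" if "SA a bs" for a bs
  proof -
    have "SB (f a) (map f bs)" using f that unfolding mhom_def by blast
    then have "SC (g (f a)) (map g (map f bs))" using g unfolding mhom_def by blast
    then show ?thesis by (simp add: comp_def)
  qed
qed

theorem theorem4p4: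
  fixes M :: "'a set" and j :: "'a \<Rightarrow> 'a \<Rightarrow> 'a" and S :: "'a \<Rightarrow> 'a list \<Rightarrow> bool"
  assumes "mass M j S"
  shows "regular (tcar M j S) (tjoin M j S) (tS M j S)
   \<and> membedding M j S (tcar M j S) (tjoin M j S) (tS M j S) (ups M j S)
   \<and> (\<forall>(T :: 'b set) jT ST \<eta>. regular T jT ST \<and> mhom M j S T jT ST \<eta> \<longrightarrow>
        (\<exists>e. Khom (tcar M j S) (tjoin M j S) (tS M j S) T jT ST e
             \<and> (\<forall>a\<in>M. e (ups M j S a) = \<eta> a)
             \<and> (\<forall>e'. Khom (tcar M j S) (tjoin M j S) (tS M j S) T jT ST e'
                     \<and> (\<forall>a\<in>M. e' (ups M j S a) = \<eta> a)
                     \<longrightarrow> (\<forall>X\<in>tcar M j S. e' X = e X))))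
   \<and> (\<forall>(U :: 'c set) jU SU \<psi>. mass U jU SU \<and> mhom M j S U jU SU \<psi> \<longrightarrow>
        (\<exists>e. Khom (tcar M j S) (tjoin M j S) (tS M j S) (tcar U jU SU) (tjoin U jU SU) (tS U jU SU) e
             \<and> (\<forall>a\<in>M. e (ups M j S a) = ups U jU SU (\<psi> a))
             \<and> (\<forall>e'. Khom (tcar M j S) (tjoin M j S) (tS M j S) (tcar U jU SU) (tjoin U jU SU) (tS U jU SU) e'
                     \<and> (\<forall>a\<in>M. e' (ups M j S a) = ups U jU SU (\<psi> a))
                     \<longrightarrow> (\<forall>X\<in>tcar M j S. e' X = e X))))"
proof -
  have ms: "mss M j S" using assms by (rule mss.intro)
  have p1: "regular (tcar M j S) (tjoin M j S) (tS M j S)" using mss.part1[OF ms] by blast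
  have p2: "membedding M j S (tcar M j S) (tjoin M j S) (tS M j S) (ups M j S)" using mss.part2[OF ms] .
  have p3: "\<forall>(T :: 'b set) jT ST \<eta>. regular T jT ST \<and> mhom M j S T jT ST \<eta> \<longrightarrow>
        (\<exists>e. Khom (tcar M j S) (tjoin M j S) (tS M j S) T jT ST e
             \<and> (\<forall>a\<in>M. e (ups M j S a) = \<eta> a)
             \<and> (\<forall>e'. Khom (tcar M j S) (tjoin M j S) (tS M j S) T jT ST e'
                     \<and> (\<forall>a\<in>M. e' (ups M j S a) = \<eta> a)
                     \<longrightarrow> (\<forall>X\<in>tcar M j S. e' X = e X)))"
    using mss.part3[OF ms] .
  have p4: "\<forall>(U :: 'c set) jU SU \<psi>. mass U jU SU \<and> mhom M j S U jU SU \<psi> \<longrightarrow>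
        (\<exists>e. Khom (tcar M j S) (tjoin M j S) (tS M j S) (tcar U jU SU) (tjoin U jU SU) (tS U jU SU) e
             \<and> (\<forall>a\<in>M. e (ups M j S a) = ups U jU SU (\<psi> a))
             \<and> (\<forall>e'. Khom (tcar M j S) (tjoin M j S) (tS M j S) (tcar U jU SU) (tjoin U jU SU) (tS U jU SU) e'
                     \<and> (\<forall>a\<in>M. e' (ups M j S a) = ups U jU SU (\<psi> a))
                     \<longrightarrow> (\<forall>X\<in>tcar M j S. e' X = e X)))"
  proof (intro allI impI)
    fix U :: "'c set" and jU SU \<psi>
    assume h: "mass U jU SU \<and> mhom M j S U jU SU \<psi>"
    have msU: "mss U jU SU" using h by (intro mss.intro) blast
    have rU: "regular (tcar U jU SU) (tjoin U jU SU) (tS U jU SU)" using mss.part1[OF msU] by blast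
    have hU: "mhom U jU SU (tcar U jU SU) (tjoin U jU SU) (tS U jU SU) (ups U jU SU)"
      using mss.ups_mhom[OF msU] .
    have comp: "mhom M j S (tcar U jU SU) (tjoin U jU SU) (tS U jU SU) (\<lambda>a. ups U jU SU (\<psi> a))"
      using mhom_comp[OF _ hU] h by blast
    have "\<exists>e. Khom (tcar M j S) (tjoin M j S) (tS M j S) (tcar U jU SU) (tjoin U jU SU) (tS U jU SU) e
             \<and> (\<forall>a\<in>M. e (ups M j S a) = (\<lambda>a. ups U jU SU (\<psi> a)) a)
             \<and> (\<forall>e'. Khom (tcar M j S) (tjoin M j S) (tS M j S) (tcar U jU SU) (tjoin U jU SU) (tS U jU SU) e'
                     \<and> (\<forall>a\<in>M. e' (ups M j S a) = (\<lambda>a. ups U jU SU (\<psi> a)) a)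
                     \<longrightarrow> (\<forall>X\<in>tcar M j S. e' X = e X))"
      using mss.part3[OF ms, rule_format, OF conjI[OF rU comp]] .
    then show "\<exists>e. Khom (tcar M j S) (tjoin M j S) (tS M j S) (tcar U jU SU) (tjoin U jU SU) (tS U jU SU) e
             \<and> (\<forall>a\<in>M. e (ups M j S a) = ups U jU SU (\<psi> a))
             \<and> (\<forall>e'. Khom (tcar M j S) (tjoin M j S) (tS M j S) (tcar U jU SU) (tjoin U jU SU) (tS U jU SU) e'
                     \<and> (\<forall>a\<in>M. e' (ups M j S a) = ups U jU SU (\<psi> a))
                     \<longrightarrow> (\<forall>X\<in>tcar M j S. e' X = e X))" by simp
  qed
  show ?thesis using p1 p2 p3 p4 by (intro conjI)
qed



end
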